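(* Let $K$ be a differential field of characteristic $0$ with $m$ commuting derivations, $x=(x_1,\dots,x_n)$, and let $\Lambda$ be a characteristic set of a prime differential ideal $P\subseteq K\{x\}$. If $\Lambda\subseteq K\{x\}_{\le r}$, then $$P\cap K\{x\}_{\le r}=(\Lambda^{(r)}):H_\Lambda^\infty,$$ where $(\Lambda^{(r)})$ is the ideal generated by $\Lambda^{(r)}$ in $K\{x\}_{\le r}$ and $(\Lambda^{(r)}):H_\Lambda^\infty=\{f\in K\{x\}_{\le r}: H_\Lambda^\ell f\in(\Lambda^{(r)})\text{ for some }\ell\ge0\}$.
   Context: $K\{x\}$ is the differential polynomial ring in $x$ over $K$, a polynomial ring in the indeterminates $\delta^\xi x_i$, $\xi\in\mathbb N^m$, $\delta^\xi=\delta_1^{\xi_1}\cdots\delta_m^{\xi_m}$, ordered by $\delta^\xi x_i<\delta^\zeta x_j$ iff $(\sum\xi_k,i,\xi_1,\dots,\xi_m)<(\sum\zeta_k,j,\zeta_1,\dots,\zeta_m)$ lexicographically. $K\{x\}_{\le r}$ is the polynomial subring in the $\delta^\xi x_i$ with $|\xi|\le r$. For nonconstant $f$: leader $v_f$ = highest indeterminate occurring, $d_f$ = degree of $f$ in $v_f$, rank $(v_f,d_f)$ ordered lexicographically, separant $S_f=\partial f/\partial v_f$, initial $I_f$ = leading coefficient in $v_f$; $H_\Lambda=\prod_{f\in\Lambda}I_fS_f$. $g$ is reduced w.r.t. $f$ if no proper derivative of $v_f$ occurs in $g$ and $\deg_{v_f}g<d_f$. $\Lambda$ is autoreduced if any two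 distinct elements are reduced w.r.t. each other (finite, listed by nondecreasing rank); $\{g_1..g_r\}<\{f_1..f_s\}$ iff for some $i\le r,s$ ranks agree below $i$ and $\mathrm{rk}\,g_i<\mathrm{rk}\,f_i$, or $r>s$ and ranks agree up to $s$. A characteristic set of $P$ is a minimal autoreduced subset of $P$ for this order. $\Lambda^{(r)}$ is the set of all $\delta^\xi f$ of order at most $r$ with $f\in\Lambda$. *)

theory Defs
  imports Main "HOL-Library.Poly_Mapping"
begin

definition is_derivation :: "('k::field \<Rightarrow> 'k) \<Rightarrow> bool" where
  "is_derivation d \<longleftrightarrow> (\<forall>a b. d (a + b) = d a + d b) \<and> (\<forall>a b. d (a * b) = a * d b + d a * b)"

definition diff_field :: "nat \<Rightarrow> (nat \<Rightarrow> 'k::field \<Rightarrow> 'k) \<Rightarrow> bool" where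
  "diff_field m D \<longleftrightarrow> (\<forall>k<m. is_derivation (D k)) \<and>
     (\<forall>k<m. \<forall>l<m. \<forall>a. D k (D l a) = D l (D k a))"

text \<open>The indeterminate \<delta>^\<xi> x_i is represented by the pair (i, \<xi>), where \<xi> is a list of
  length m (the exponent vector) and i < n (variables indexed from 0).\<close>

type_synonym dvar = "nat \<times> nat list"
type_synonym 'k dpoly = "(dvar \<Rightarrow>\<^sub>0 nat) \<Rightarrow>\<^sub>0 'k"

definition valid_var :: "nat \<Rightarrow> nat \<Rightarrow> dvar \<Rightarrow> bool" where
  "valid_var n m v \<longleftrightarrow> fst v < n \<and> length (snd v) = m"

definition vars :: "'k::zero dpoly \<Rightarrow> dvar set" where
  "vars f = (\<Union>M\<in>Poly_Mapping.keys f. Poly_Mapping.keys (M::dvar \<Rightarrow>\<^sub>0 nat))"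

definition Kx :: "nat \<Rightarrow> nat \<Rightarrow> 'k::zero dpoly set" where
  "Kx n m = {f. \<forall>v\<in>vars f. valid_var n m v}"

definition Kx_le :: "nat \<Rightarrow> nat \<Rightarrow> nat \<Rightarrow> 'k::zero dpoly set" where
  "Kx_le n m r = {f. \<forall>v\<in>vars f. valid_var n m v \<and> sum_list (snd v) \<le> r}"

text \<open>Derivation \<delta>_k on K{x}: extends D k on coefficients and maps \<delta>^\<xi> x_i to
  \<delta>^(\<xi>+e_k) x_i.\<close>
definition shift_var :: "nat \<Rightarrow> dvar \<Rightarrow> dvar" where
  "shift_var k v = (fst v, (snd v)[k := snd v ! k + 1])"

definition deriv_poly :: "(nat \<Rightarrow> 'k::comm_ring_1 \<Rightarrow> 'k) \<Rightarrow> nat \<Rightarrow> 'k dpoly \<Rightarrow> 'k dpoly" where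
  "deriv_poly D k f =
     (\<Sum>M\<in>Poly_Mapping.keys f. Poly_Mapping.single M (D k (Poly_Mapping.lookup f M)) +
        (\<Sum>v\<in>Poly_Mapping.keys M. Poly_Mapping.single (M - Poly_Mapping.single v 1 + Poly_Mapping.single (shift_var k v) 1)
                          (of_nat (Poly_Mapping.lookup M v) * Poly_Mapping.lookup f M)))"

definition dpow :: "(nat \<Rightarrow> 'k::comm_ring_1 \<Rightarrow> 'k) \<Rightarrow> nat list \<Rightarrow> 'k dpoly \<Rightarrow> 'k dpoly" where
  "dpow D \<xi> f = foldr (\<lambda>k g. (deriv_poly D k ^^ (\<xi> ! k)) g) [0..<length \<xi>] f"

definition var_less :: "dvar \<Rightarrow> dvar \<Rightarrow> bool" where
  "var_less v w \<longleftrightarrow>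
     sum_list (snd v) < sum_list (snd w) \<or>
     (sum_list (snd v) = sum_list (snd w) \<and>
       (fst v < fst w \<or> (fst v = fst w \<and> (snd v, snd w) \<in> lex {(a, b). (a::nat) < b})))"

definition nonconstant :: "'k::zero dpoly \<Rightarrow> bool" where
  "nonconstant f \<longleftrightarrow> vars f \<noteq> {}"

definition leader :: "'k::zero dpoly \<Rightarrow> dvar" where
  "leader f = (THE v. v \<in> vars f \<and> (\<forall>w\<in>vars f. w \<noteq> v \<longrightarrow> var_less w v))"

definition deg_in :: "dvar \<Rightarrow> 'k::zero dpoly \<Rightarrow> nat" where
  "deg_in v f = Max (insert 0 ((\<lambda>M. Poly_Mapping.lookup M v) ` Poly_Mapping.keys f))"

definition rank :: "'k::zero dpoly \<Rightarrow> dvar \<times> nat" where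
  "rank f = (leader f, deg_in (leader f) f)"

definition rank_less :: "dvar \<times> nat \<Rightarrow> dvar \<times> nat \<Rightarrow> bool" where
  "rank_less a b \<longleftrightarrow> var_less (fst a) (fst b) \<or> (fst a = fst b \<and> snd a < snd b)"

definition coeff_in :: "dvar \<Rightarrow> nat \<Rightarrow> 'k::comm_ring_1 dpoly \<Rightarrow> 'k dpoly" where
  "coeff_in v d f =
     (\<Sum>M\<in>{M\<in>Poly_Mapping.keys f. Poly_Mapping.lookup M v = d}. Poly_Mapping.single (M - Poly_Mapping.single v d) (Poly_Mapping.lookup f M))"

definition pderiv_var :: "dvar \<Rightarrow> 'k::comm_ring_1 dpoly \<Rightarrow> 'k dpoly" where
  "pderiv_var v f =
     (\<Sum>M\<in>Poly_Mapping.keys f. Poly_Mapping.single (M - Poly_Mapping.single v 1) (of_nat (Poly_Mapping.lookup M v) * Poly_Mapping.lookup f M))"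

definition initial :: "'k::comm_ring_1 dpoly \<Rightarrow> 'k dpoly" where
  "initial f = coeff_in (leader f) (deg_in (leader f) f) f"

definition separant :: "'k::comm_ring_1 dpoly \<Rightarrow> 'k dpoly" where
  "separant f = pderiv_var (leader f) f"

definition proper_deriv_of :: "dvar \<Rightarrow> dvar \<Rightarrow> bool" where
  "proper_deriv_of w v \<longleftrightarrow> fst w = fst v \<and> length (snd w) = length (snd v) \<and>
     (\<forall>k<length (snd v). snd v ! k \<le> snd w ! k) \<and> snd w \<noteq> snd v"

definition reduced_wrt :: "'k::zero dpoly \<Rightarrow> 'k dpoly \<Rightarrow> bool" where
  "reduced_wrt g f \<longleftrightarrow> (\<forall>w\<in>vars g. \<not> proper_deriv_of w (leader f)) \<and> deg_in (leader f) g < deg_in (leader f) f"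

definition autoreduced :: "'k::zero dpoly list \<Rightarrow> bool" where
  "autoreduced L \<longleftrightarrow> distinct L \<and> (\<forall>f\<in>set L. nonconstant f) \<and>
     sorted_wrt (\<lambda>f g. \<not> rank_less (rank g) (rank f)) L \<and>
     (\<forall>f\<in>set L. \<forall>g\<in>set L. f \<noteq> g \<longrightarrow> reduced_wrt g f)"

definition auto_less :: "'k::zero dpoly list \<Rightarrow> 'k dpoly list \<Rightarrow> bool" where
  "auto_less G F \<longleftrightarrow>
     (\<exists>i. i < length G \<and> i < length F \<and> (\<forall>j<i. rank (G ! j) = rank (F ! j)) \<and>
          rank_less (rank (G ! i)) (rank (F ! i))) \<or>
     (length G > length F \<and> (\<forall>j<length F. rank (G ! j) = rank (F ! j)))"

definition char_set :: "'k::zero dpoly list \<Rightarrow> 'k dpoly set \<Rightarrow> bool" where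
  "char_set L P \<longleftrightarrow> autoreduced L \<and> set L \<subseteq> P \<and>
     (\<forall>L'. autoreduced L' \<and> set L' \<subseteq> P \<longrightarrow> \<not> auto_less L' L)"

definition is_ideal_in :: "'a::comm_ring_1 set \<Rightarrow> 'a set \<Rightarrow> bool" where
  "is_ideal_in R I \<longleftrightarrow> I \<subseteq> R \<and> 0 \<in> I \<and> (\<forall>a\<in>I. \<forall>b\<in>I. a + b \<in> I) \<and> (\<forall>r\<in>R. \<forall>a\<in>I. r * a \<in> I)"

definition is_prime_ideal_in :: "'a::comm_ring_1 set \<Rightarrow> 'a set \<Rightarrow> bool" where
  "is_prime_ideal_in R I \<longleftrightarrow> is_ideal_in R I \<and> 1 \<notin> I \<and>
     (\<forall>a\<in>R. \<forall>b\<in>R. a * b \<in> I \<longrightarrow> a \<in> I \<or> b \<in> I)"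

definition prime_diff_ideal :: "nat \<Rightarrow> nat \<Rightarrow> (nat \<Rightarrow> 'k::comm_ring_1 \<Rightarrow> 'k) \<Rightarrow> 'k dpoly set \<Rightarrow> bool" where
  "prime_diff_ideal n m D P \<longleftrightarrow> is_prime_ideal_in (Kx n m) P \<and>
     (\<forall>k<m. \<forall>p\<in>P. deriv_poly D k p \<in> P)"

definition gen_ideal :: "'a::comm_ring_1 set \<Rightarrow> 'a set \<Rightarrow> 'a set" where
  "gen_ideal R S = {sum_list (map (\<lambda>(a, g). a * g) ps) | ps. \<forall>(a, g)\<in>set ps. a \<in> R \<and> g \<in> S}"

definition saturation :: "'a::comm_ring_1 set \<Rightarrow> 'a set \<Rightarrow> 'a \<Rightarrow> 'a set" where
  "saturation R I h = {f\<in>R. \<exists>l::nat. h ^ l * f \<in> I}"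

definition prolong :: "nat \<Rightarrow> nat \<Rightarrow> (nat \<Rightarrow> 'k::comm_ring_1 \<Rightarrow> 'k) \<Rightarrow> nat \<Rightarrow> 'k dpoly set \<Rightarrow> 'k dpoly set" where
  "prolong n m D r \<Lambda> = {dpow D \<xi> f | \<xi> f. f \<in> \<Lambda> \<and> length \<xi> = m \<and> dpow D \<xi> f \<in> Kx_le n m r}"

definition H_of :: "'k::comm_ring_1 dpoly set \<Rightarrow> 'k dpoly" where
  "H_of \<Lambda> = (\<Prod>f\<in>\<Lambda>. initial f * separant f)"

end

theory Submission
  imports Defs
begin


lemma lex_nat_iff:
  "(xs, ys) \<in> lex {(a,b). (a::nat) < b} \<longleftrightarrow>
    length xs = length ys \<and> (\<exists>i<length xs. (\<forall>j<i. xs!j = ys!j) \<and> xs!i < ys!i)"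
proof (induction xs arbitrary: ys)
  case Nil
  then show ?case by simp
next
  case (Cons x xs)
  show ?case
  proof (cases ys)
    case Nil
    then show ?thesis by simp
  next
    case (Cons y ys')
    have "(x # xs, y # ys') \<in> lex {(a,b). (a::nat) < b} \<longleftrightarrow>
        (x < y \<and> length xs = length ys') \<or> (x = y \<and> (xs, ys') \<in> lex {(a,b). (a::nat) < b})"
      by simp
    also have "\<dots> \<longleftrightarrow> length (x#xs) = length (y#ys') \<and>
       (\<exists>i<length (x#xs). (\<forall>j<i. (x#xs)!j = (y#ys')!j) \<and> (x#xs)!i < (y#ys')!i)"
      (is "?A \<longleftrightarrow> ?B")
    proof
      assume ?A
      then show ?B
      proof
        assume "x < y \<and> length xs = length ys'"
        then show ?B by (intro conjI exI[of _ 0]) auto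
      next
        assume h: "x = y \<and> (xs, ys') \<in> lex {(a,b). (a::nat) < b}"
        then obtain i where i: "i<length xs" "\<forall>j<i. xs!j = ys'!j" "xs!i < ys'!i" and l: "length xs = length ys'"
          using Cons.IH by blast
        show ?B
        proof (intro conjI exI[of _ "Suc i"])
          show "\<forall>j<Suc i. (x # xs) ! j = (y # ys') ! j"
            using h i by (auto simp: less_Suc_eq_0_disj)
        qed (use i l in auto)
      qed
    next
      assume ?B
      then obtain i where l: "length xs = length ys'" and i: "i < Suc (length xs)"
        "\<forall>j<i. (x#xs)!j = (y#ys')!j" "(x#xs)!i < (y#ys')!i" by auto
      show ?A
      proof (cases i)
        case 0
        then show ?thesis using i l by auto
      next
        case (Suc i')
        have "x = y" using i(2) Suc by force
        moreover have "(xs, ys') \<in> lex {(a,b). (a::nat) < b}"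
          unfolding Cons.IH
        proof (intro conjI exI[of _ i'])
          show "\<forall>j<i'. xs ! j = ys' ! j" using i(2) Suc by force
        qed (use i l Suc in auto)
        ultimately show ?thesis by simp
      qed
    qed
    finally show ?thesis using Cons by simp
  qed
qed


lemma vl_irrefl: "\<not> var_less v v"
  unfolding var_less_def by (auto simp: lex_nat_iff)

lemma vl_trans: assumes "var_less a b" "var_less b c" shows "var_less a c"
proof -
  have tr: "trans (lex {(a,b). (a::nat) < b})"
    by (rule lex_transI) (auto simp: trans_def)
  show ?thesis using assms unfolding var_less_def
    using transD[OF tr] by (auto; metis order_less_trans)+
qed

lemma vl_asym: "var_less a b \<Longrightarrow> \<not> var_less b a"
  using vl_irrefl vl_trans by blast

lemma lex_total_nat:
  assumes "length xs = length ys" "xs \<noteq> ys"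
  shows "(xs, ys) \<in> lex {(a,b). (a::nat) < b} \<or> (ys, xs) \<in> lex {(a,b). (a::nat) < b}"
proof -
  have "total {(a,b). (a::nat) < b}" by (auto simp: total_on_def)
  then have "total (lenlex {(a,b). (a::nat) < b})" by (rule total_lenlex)
  then have "(xs, ys) \<in> lenlex {(a,b). (a::nat) < b} \<or> (ys, xs) \<in> lenlex {(a,b). (a::nat) < b}"
    using assms by (auto simp: total_on_def)
  then show ?thesis using assms by (auto simp: lenlex_conv)
qed

lemma vl_total:
  assumes "length (snd v) = length (snd w)" "v \<noteq> w"
  shows "var_less v w \<or> var_less w v"
proof -
  obtain i xs j ys where v: "v = (i, xs)" and w: "w = (j, ys)" by (cases v, cases w)
  show ?thesis using assms lex_total_nat[of xs ys] unfolding v w var_less_def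
    by auto
qed

lemma sum_list_shift:
  fixes xs :: "nat list"
  assumes "k < length xs"
  shows "sum_list (xs[k := xs ! k + 1]) = sum_list xs + 1"
  using assms
proof (induction xs arbitrary: k)
  case (Cons a xs)
  then show ?case by (cases k) auto
qed simp

lemma sum_list_shift' [simp]:
  fixes xs :: "nat list"
  assumes "k < length xs"
  shows "sum_list (xs[k := Suc (xs ! k)]) = Suc (sum_list xs)"
  using sum_list_shift[OF assms] by simp

lemma vl_shift:
  assumes "k < length (snd u)"
  shows "var_less u (shift_var k u)"
  using assms by (simp add: var_less_def shift_var_def sum_list_shift)

lemma length_shift [simp]: "length (snd (shift_var k u)) = length (snd u)"
  by (simp add: shift_var_def)

lemma fst_shift [simp]: "fst (shift_var k u) = fst u"
  by (simp add: shift_var_def)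

lemma valid_shift: "valid_var n m u \<Longrightarrow> valid_var n m (shift_var k u)"
  by (simp add: valid_var_def)

lemma shift_inj:
  assumes "shift_var k t = shift_var k u"
  shows "t = u"
proof -
  obtain i xs j ys where t: "t = (i, xs)" and u: "u = (j, ys)" by (cases t, cases u)
  have "i = j" and e: "xs[k := xs ! k + 1] = ys[k := ys ! k + 1]" using assms by (auto simp: shift_var_def t u)
  have l: "length xs = length ys" using arg_cong[OF e, of length] by simp
  have "xs = ys"
  proof (rule nth_equalityI)
    fix i assume "i < length xs"
    then show "xs ! i = ys ! i" using arg_cong[OF e, of "\<lambda>l. l ! i"] l
      by (cases "i = k") auto
  qed (use l in auto)
  then show ?thesis using \<open>i = j\<close> t u by simp
qed

lemma vl_shift_mono:
  assumes "var_less t u" "k < length (snd t)" "k < length (snd u)"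
  shows "var_less (shift_var k t) (shift_var k u)"
proof -
  obtain i xs j ys where t: "t = (i, xs)" and u: "u = (j, ys)" by (cases t, cases u)
  have s: "sum_list (xs[k := xs ! k + 1]) = sum_list xs + 1" "sum_list (ys[k := ys ! k + 1]) = sum_list ys + 1"
    using assms by (auto simp: t u sum_list_shift)
  have lexupd: "(xs[k := xs ! k + 1], ys[k := ys ! k + 1]) \<in> lex {(a,b). (a::nat) < b}"
    if "(xs, ys) \<in> lex {(a,b). (a::nat) < b}"
  proof -
    from that obtain p where p: "length xs = length ys" "p < length xs" "\<forall>j<p. xs!j = ys!j" "xs!p < ys!p"
      unfolding lex_nat_iff by blast
    show ?thesis unfolding lex_nat_iff
    proof (intro conjI exI[of _ p])
      show "\<forall>j<p. xs[k := xs ! k + 1] ! j = ys[k := ys ! k + 1] ! j"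
        using p assms by (auto simp: t u nth_list_update)
      show "xs[k := xs ! k + 1] ! p < ys[k := ys ! k + 1] ! p"
        using p assms by (auto simp: t u nth_list_update)
    qed (use p in auto)
  qed
  show ?thesis using assms(1) lexupd s unfolding t u var_less_def shift_var_def by auto
qed

lemma sum_list_nth_le_strict:
  fixes xs ys :: "nat list"
  assumes "length xs = length ys" "\<forall>k<length xs. xs ! k \<le> ys ! k" "xs \<noteq> ys"
  shows "sum_list xs < sum_list ys"
proof -
  obtain k where k: "k < length xs" "xs ! k \<noteq> ys ! k"
    using assms nth_equalityI by blast
  have "sum_list xs = (\<Sum>i<length xs. xs ! i)" by (simp add: sum_list_sum_nth atLeast0LessThan)
  also have "\<dots> < (\<Sum>i<length xs. ys ! i)"
    by (rule sum_strict_mono_ex1) (use assms k in \<open>auto intro!: bexI[of _ k]\<close>)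
  also have "\<dots> = sum_list ys" using assms(1) by (simp add: sum_list_sum_nth atLeast0LessThan)
  finally show ?thesis .
qed

lemma proper_deriv_less:
  assumes "proper_deriv_of w v"
  shows "var_less v w"
  using assms sum_list_nth_le_strict[of "snd v" "snd w"]
  unfolding proper_deriv_of_def var_less_def by auto

definition vle :: "dvar \<Rightarrow> dvar \<Rightarrow> bool" where
  "vle t u \<longleftrightarrow> t = u \<or> var_less t u"

lemma vle_sum: "vle t u \<Longrightarrow> sum_list (snd t) \<le> sum_list (snd u)"
  unfolding vle_def var_less_def by auto

lemma vle_refl [simp]: "vle t t" by (simp add: vle_def)

lemma vle_vl_trans: "vle a b \<Longrightarrow> var_less b c \<Longrightarrow> var_less a c"
  unfolding vle_def using vl_trans by blast

lemma vl_vle_trans: "var_less a b \<Longrightarrow> vle b c \<Longrightarrow> var_less a c"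
  unfolding vle_def using vl_trans by blast

lemma vle_trans: "vle a b \<Longrightarrow> vle b c \<Longrightarrow> vle a c"
  unfolding vle_def using vl_trans by blast

lemma not_vl_vle:
  assumes "length (snd v) = length (snd w)" "\<not> var_less w v"
  shows "vle v w"
  using vl_total[OF assms(1)] assms(2) unfolding vle_def by blast


abbreviation "lk \<equiv> Poly_Mapping.lookup"
abbreviation "ks \<equiv> Poly_Mapping.keys"
abbreviation "sg \<equiv> Poly_Mapping.single"

lemma vars_iff: "u \<in> vars f \<longleftrightarrow> (\<exists>M\<in>ks f. u \<in> ks M)"
  by (simp add: vars_def)

lemma vars_zero [simp]: "vars 0 = {}"
  by (simp add: vars_def)

lemma vars_one [simp]: "vars (1::'k::comm_ring_1 dpoly) = {}"
  by (simp add: vars_def)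

lemma vars_add: "vars (f + g) \<subseteq> vars f \<union> vars g"
  using keys_add[of f g] by (auto simp: vars_def)

lemma vars_uminus [simp]: "vars (- f) = vars (f::'k::ab_group_add dpoly)"
  by (simp add: vars_def)

lemma vars_diff: "vars (f - g) \<subseteq> vars f \<union> vars (g::'k::ab_group_add dpoly)"
  using keys_diff[of f g] by (auto simp: vars_def)

lemma keys_add_nat: "ks (M + N) \<subseteq> ks M \<union> ks (N :: dvar \<Rightarrow>\<^sub>0 nat)"
  by (rule keys_add)

lemma vars_mult: "vars (f * g) \<subseteq> vars f \<union> vars (g::'k::comm_ring_1 dpoly)"
proof
  fix u assume "u \<in> vars (f * g)"
  then obtain M where M: "M \<in> ks (f * g)" "u \<in> ks M" by (auto simp: vars_def)
  then obtain a b where "M = a + b" "a \<in> ks f" "b \<in> ks g" using keys_mult[of f g] by blast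
  then show "u \<in> vars f \<union> vars g" using M keys_add_nat[of a b] by (auto simp: vars_def)
qed

lemma vars_sum: "vars (sum F A) \<subseteq> (\<Union>a\<in>A. vars (F a :: 'k::comm_monoid_add dpoly))"
  using keys_sum[of F A] unfolding vars_def by blast

lemma vars_single: "vars (sg M c) \<subseteq> ks M"
  by (simp add: vars_def)

lemma vars_power: "vars (f ^ k) \<subseteq> vars (f::'k::comm_ring_1 dpoly)"
  by (induction k) (use vars_mult in auto)

lemma vars_prod: "vars (prod F A) \<subseteq> (\<Union>a\<in>A. vars (F a :: 'k::comm_ring_1 dpoly))"
proof (induction A rule: infinite_finite_induct)
  case (insert x F)
  then show ?case using vars_mult by fastforce
qed auto

definition degle :: "dvar \<Rightarrow> nat \<Rightarrow> 'k::zero dpoly \<Rightarrow> bool" where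
  "degle u d f \<longleftrightarrow> (\<forall>M\<in>ks f. lk M u \<le> d)"

lemma degle_zero [simp]: "degle u d 0"
  by (simp add: degle_def)

lemma degle_add: "degle u d f \<Longrightarrow> degle u d g \<Longrightarrow> degle u d (f + g)"
  using keys_add[of f g] by (auto simp: degle_def)

lemma degle_uminus [simp]: "degle u d (- f) = degle u d (f::'k::ab_group_add dpoly)"
  by (simp add: degle_def)

lemma degle_diff: "degle u d f \<Longrightarrow> degle u d g \<Longrightarrow> degle u d (f - (g::'k::ab_group_add dpoly))"
  using keys_diff[of f g] by (auto simp: degle_def)

lemma degle_mult: "degle u a f \<Longrightarrow> degle u b g \<Longrightarrow> degle u (a + b) (f * (g::'k::comm_ring_1 dpoly))"
proof -
  assume f: "degle u a f" and g: "degle u b g"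
  show ?thesis unfolding degle_def
  proof
    fix M assume "M \<in> ks (f * g)"
    then obtain x y where "M = x + y" "x \<in> ks f" "y \<in> ks g" using keys_mult[of f g] by blast
    then show "lk M u \<le> a + b" using f g by (auto simp: degle_def lookup_add add_mono)
  qed
qed

lemma degle_sum: "(\<And>x. x \<in> A \<Longrightarrow> degle u d (F x)) \<Longrightarrow> degle u d (sum F A :: 'k::comm_monoid_add dpoly)"
  using keys_sum[of F A] by (auto simp: degle_def)

lemma degle_mono: "degle u a f \<Longrightarrow> a \<le> b \<Longrightarrow> degle u b f"
  by (auto simp: degle_def)

lemma degle_0_iff: "degle u 0 f \<longleftrightarrow> u \<notin> vars f"
  by (auto simp: degle_def vars_def in_keys_iff)

lemma degle_single: "lk M u \<le> d \<Longrightarrow> degle u d (sg M c)"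
  by (simp add: degle_def)

lemma deg_in_le_iff: "deg_in u f \<le> d \<longleftrightarrow> degle u d f"
  by (auto simp: deg_in_def degle_def)

lemma degle_deg_in: "degle u (deg_in u f) f"
  using deg_in_le_iff by blast

lemma lk_le_deg_in: "M \<in> ks f \<Longrightarrow> lk M u \<le> deg_in u f"
  using degle_deg_in[of u f] by (auto simp: degle_def)

lemma deg_in_attained:
  assumes "deg_in u f > 0"
  shows "\<exists>M\<in>ks f. lk M u = deg_in u f"
proof -
  have fin: "finite (insert 0 ((\<lambda>M. lk M u) ` ks f))" by simp
  have "deg_in u f \<in> insert 0 ((\<lambda>M. lk M u) ` ks f)"
    unfolding deg_in_def by (rule Max_in[OF fin]) simp
  then show ?thesis using assms by auto
qed

lemma in_vars_deg_pos: "u \<in> vars f \<Longrightarrow> deg_in u f > 0"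
  using degle_0_iff[of u f] deg_in_le_iff[of u f 0] by auto

lemma deg_pos_in_vars: "deg_in u f > 0 \<Longrightarrow> u \<in> vars f"
  using degle_0_iff[of u f] deg_in_le_iff[of u f 0] by auto

definition VS :: "nat \<Rightarrow> nat \<Rightarrow> nat \<Rightarrow> dvar set" where
  "VS n m r = {v. valid_var n m v \<and> sum_list (snd v) \<le> r}"

lemma Kx_le_iff: "f \<in> Kx_le n m r \<longleftrightarrow> vars f \<subseteq> VS n m r"
  by (auto simp: Kx_le_def VS_def)

lemma Kx_iff: "f \<in> Kx n m \<longleftrightarrow> vars f \<subseteq> {v. valid_var n m v}"
  by (auto simp: Kx_def)

lemma Kx_le_Kx: "f \<in> Kx_le n m r \<Longrightarrow> f \<in> Kx n m"
  by (auto simp: Kx_le_def Kx_def)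

lemma finite_VS: "finite (VS n m r)"
proof -
  have "VS n m r \<subseteq> {..<n} \<times> {xs. set xs \<subseteq> {..r} \<and> length xs = m}"
  proof
    fix v assume v: "v \<in> VS n m r"
    have "set (snd v) \<subseteq> {..r}"
    proof
      fix x assume "x \<in> set (snd v)"
      then have "x \<le> sum_list (snd v)" by (simp add: member_le_sum_list)
      then show "x \<in> {..r}" using v by (auto simp: VS_def)
    qed
    then show "v \<in> {..<n} \<times> {xs. set xs \<subseteq> {..r} \<and> length xs = m}"
      using v by (cases v) (auto simp: VS_def valid_var_def)
  qed
  moreover have "finite ({..<n} \<times> {xs. set xs \<subseteq> {..r} \<and> length xs = m})"
    by (intro finite_cartesian_product finite_lists_length_eq) auto
  ultimately show ?thesis by (rule finite_subset)
qed


lemma finite_vars [simp]: "finite (vars f)"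
  by (simp add: vars_def)

lemma exists_max_var:
  assumes "finite A" "A \<noteq> {}" "\<forall>a\<in>A. length (snd a) = m"
  shows "\<exists>x\<in>A. \<forall>y\<in>A. y \<noteq> x \<longrightarrow> var_less y x"
  using assms
proof (induction A rule: finite_ne_induct)
  case (singleton x)
  then show ?case by auto
next
  case (insert a A)
  then obtain x where x: "x \<in> A" "\<forall>y\<in>A. y \<noteq> x \<longrightarrow> var_less y x" by auto
  show ?case
  proof (cases "var_less x a")
    case True
    have "\<forall>y\<in>insert a A. y \<noteq> a \<longrightarrow> var_less y a"
    proof (intro ballI impI)
      fix y assume "y \<in> insert a A" "y \<noteq> a"
      then have "y \<in> A" by simp
      show "var_less y a"
      proof (cases "y = x")
        case True then show ?thesis using \<open>var_less x a\<close> by simp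
      next
        case False then show ?thesis using x(2) \<open>y \<in> A\<close> \<open>var_less x a\<close> vl_trans by blast
      qed
    qed
    then show ?thesis by blast
  next
    case False
    have la: "length (snd a) = length (snd x)" using insert.prems x(1) by simp
    then have "a = x \<or> var_less a x" using vl_total[OF la] False by blast
    then show ?thesis using x by (intro bexI[of _ x]) auto
  qed
qed

lemma leader_props:
  assumes "nonconstant f" "f \<in> Kx n m"
  shows "leader f \<in> vars f" "\<And>w. w \<in> vars f \<Longrightarrow> vle w (leader f)"
proof -
  have len: "\<forall>a\<in>vars f. length (snd a) = m" using assms(2) by (auto simp: Kx_def valid_var_def)
  obtain x where x: "x \<in> vars f" "\<forall>y\<in>vars f. y \<noteq> x \<longrightarrow> var_less y x"
    using exists_max_var[OF finite_vars _ len] assms(1) by (auto simp: nonconstant_def)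
  have uniq: "v = x" if "v \<in> vars f \<and> (\<forall>w\<in>vars f. w \<noteq> v \<longrightarrow> var_less w v)" for v
  proof (rule ccontr)
    assume "v \<noteq> x"
    then have "x \<noteq> v" by simp
    then have "var_less x v" using that x(1) by blast
    moreover have "var_less v x" using x(2) that \<open>v \<noteq> x\<close> by blast
    ultimately show False using vl_asym by blast
  qed
  have "leader f = x" unfolding leader_def
  proof (rule the_equality)
    show "x \<in> vars f \<and> (\<forall>w\<in>vars f. w \<noteq> x \<longrightarrow> var_less w x)" using x by blast
  qed (rule uniq)
  then show "leader f \<in> vars f" "\<And>w. w \<in> vars f \<Longrightarrow> vle w (leader f)"
    using x by (auto simp: vle_def)
qed

lemma deg_leader_pos:
  assumes "nonconstant f" "f \<in> Kx n m"
  shows "deg_in (leader f) f > 0"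
  using leader_props[OF assms] in_vars_deg_pos by blast

lemma valid_of_Kx: "f \<in> Kx n m \<Longrightarrow> v \<in> vars f \<Longrightarrow> valid_var n m v"
  by (auto simp: Kx_def)

lemma constant_poly:
  assumes "vars f = {}"
  shows "f = sg 0 (lk f 0)"
proof (rule poly_mapping_eqI)
  fix M
  show "lk f M = lk (sg 0 (lk f 0)) M"
  proof (cases "M = 0")
    case False
    then obtain u where "u \<in> ks M" by (metis keys_eq_empty ex_in_conv)
    then have "M \<notin> ks f" using assms by (auto simp: vars_def)
    then show ?thesis using False by (simp add: in_keys_iff lookup_single when_def)
  qed (simp)
qed


definition Xp :: "dvar \<Rightarrow> nat \<Rightarrow> 'k::comm_ring_1 dpoly" where
  "Xp w d = sg (sg w d) 1"

lemma Xp_mult: "Xp w a * Xp w b = (Xp w (a + b) :: 'k::comm_ring_1 dpoly)"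
  by (simp add: Xp_def mult_single single_add)

lemma lk_single_var: "lk (sg w d) u = (if u = w then d else 0)"
  by (simp add: lookup_single when_def)

lemma vars_Xp: "vars (Xp w d :: 'k::comm_ring_1 dpoly) \<subseteq> {w}"
  by (auto simp: Xp_def vars_def)

lemma degle_Xp: "degle w d (Xp w d :: 'k::comm_ring_1 dpoly)"
  by (simp add: Xp_def degle_def)

lemma degle_Xp_other: "u \<noteq> w \<Longrightarrow> degle u 0 (Xp w d :: 'k::comm_ring_1 dpoly)"
  by (simp add: Xp_def degle_def lk_single_var)

lemma lk_sum_single:
  assumes "finite A"
  shows "lk (\<Sum>M\<in>A. sg M (c M)) N = (if N \<in> A then c N else (0::'b::comm_monoid_add))"
  using assms by (simp add: lookup_sum lookup_single when_def)

lemma poly_expand: "f = (\<Sum>M\<in>ks f. sg M (lk f M))"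
  by (rule poly_mapping_eqI) (simp add: lk_sum_single in_keys_iff)

lemma minus_add_single:
  assumes "d \<le> lk M w"
  shows "M - sg w d + sg w d = (M :: dvar \<Rightarrow>\<^sub>0 nat)"
  by (rule poly_mapping_eqI) (use assms in \<open>simp add: lookup_add lookup_minus lk_single_var\<close>)

lemma lk_minus_single: "lk (M - sg w d) u = lk M u - (if u = w then d else 0)"
  by (simp add: lookup_minus lk_single_var)

lemma coeff_in_times_Xp:
  "coeff_in w d f * Xp w d = (\<Sum>M\<in>{M\<in>ks f. lk M w = d}. sg M (lk f M))"
  unfolding coeff_in_def Xp_def sum_distrib_right mult_single
  by (rule sum.cong) (auto simp: minus_add_single)

lemma lk_coeff_Xp: "lk (coeff_in w d f * Xp w d) N = (if lk N w = d then lk f N else 0)"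
  unfolding coeff_in_times_Xp by (subst lk_sum_single) (auto simp: in_keys_iff)

lemma keys_coeff_in:
  assumes "M \<in> ks (coeff_in w d f)"
  shows "\<exists>N\<in>ks f. lk N w = d \<and> M = N - sg w d"
proof -
  have "M \<in> (\<Union>N\<in>{N\<in>ks f. lk N w = d}. ks (sg (N - sg w d) (lk f N)))"
    using assms keys_sum[of "\<lambda>N. sg (N - sg w d) (lk f N)" "{N\<in>ks f. lk N w = d}"]
    unfolding coeff_in_def by blast
  then obtain N where "N \<in> ks f" "lk N w = d" "M \<in> ks (sg (N - sg w d) (lk f N))" by blast
  then show ?thesis by (intro bexI[of _ N]) (auto split: if_splits)
qed

lemma vars_coeff_in: "vars (coeff_in w d f) \<subseteq> vars f - {w}"
proof
  fix u assume "u \<in> vars (coeff_in w d f)"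
  then obtain M where M: "M \<in> ks (coeff_in w d f)" "u \<in> ks M" by (auto simp: vars_def)
  then obtain N where N: "N \<in> ks f" "lk N w = d" "M = N - sg w d" using keys_coeff_in by blast
  have "lk M u \<noteq> 0" using M by (simp add: in_keys_iff)
  then show "u \<in> vars f - {w}" using N by (auto simp: lk_minus_single vars_def in_keys_iff split: if_splits)
qed

lemma degle_coeff_in: "degle u k f \<Longrightarrow> degle u k (coeff_in w d f)"
  unfolding degle_def
proof
  fix M assume h: "\<forall>M\<in>ks f. lk M u \<le> k" and "M \<in> ks (coeff_in w d f)"
  then obtain N where N: "N \<in> ks f" "lk N w = d" "M = N - sg w d" using keys_coeff_in by blast
  then show "lk M u \<le> k" using h by (auto simp: lk_minus_single)
qed

lemma coeff_in_nz:
  assumes "N \<in> ks f" "lk N w = d"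
  shows "coeff_in w d f \<noteq> 0"
proof
  assume "coeff_in w d f = 0"
  then have "lk (coeff_in w d f * Xp w d) N = 0" by simp
  then show False using assms by (simp add: lk_coeff_Xp in_keys_iff)
qed

lemma keys_pderiv:
  assumes "M \<in> ks (pderiv_var w f)"
  shows "\<exists>N\<in>ks f. M = N - sg w 1"
proof -
  have "M \<in> (\<Union>N\<in>ks f. ks (sg (N - sg w 1) (of_nat (lk N w) * lk f N)))"
    using assms keys_sum[of "\<lambda>N. sg (N - sg w 1) (of_nat (lk N w) * lk f N)" "ks f"]
    unfolding pderiv_var_def by blast
  then obtain N where "N \<in> ks f" "M \<in> ks (sg (N - sg w 1) (of_nat (lk N w) * lk f N))" by blast
  then show ?thesis by (intro bexI[of _ N]) (auto split: if_splits)
qed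

lemma vars_pderiv: "vars (pderiv_var w f) \<subseteq> vars f"
proof
  fix u assume "u \<in> vars (pderiv_var w f)"
  then obtain M where M: "M \<in> ks (pderiv_var w f)" "u \<in> ks M" by (auto simp: vars_def)
  then obtain N where N: "N \<in> ks f" "M = N - sg w 1" using keys_pderiv by blast
  have "lk M u \<noteq> 0" using M by (simp add: in_keys_iff)
  then have "lk N u \<noteq> 0" using N by (auto simp: lk_minus_single split: if_splits)
  then show "u \<in> vars f" using N(1) by (auto simp: vars_def in_keys_iff)
qed

lemma degle_pderiv: "degle u k f \<Longrightarrow> degle u k (pderiv_var w f)"
  unfolding degle_def
proof
  fix M assume h: "\<forall>M\<in>ks f. lk M u \<le> k" and "M \<in> ks (pderiv_var w f)"
  then obtain N where N: "N \<in> ks f" "M = N - sg w 1" using keys_pderiv by blast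
  then show "lk M u \<le> k" using h by (auto simp: lk_minus_single)
qed

lemma degle_pderiv_self: "degle w k f \<Longrightarrow> degle w (k - 1) (pderiv_var w f)"
  unfolding degle_def
proof
  fix M assume h: "\<forall>M\<in>ks f. lk M w \<le> k" and "M \<in> ks (pderiv_var w f)"
  then obtain N where N: "N \<in> ks f" "M = N - sg w 1" using keys_pderiv by blast
  then show "lk M w \<le> k - 1" using h by (auto simp: lk_minus_single)
qed

lemma pderiv_times_X:
  "pderiv_var w f * Xp w 1 = (\<Sum>M\<in>ks f. sg M (of_nat (lk M w) * lk f M))"
  unfolding pderiv_var_def Xp_def sum_distrib_right mult_single
proof (rule sum.cong)
  fix M assume "M \<in> ks f"
  show "sg (M - sg w 1 + sg w 1) (of_nat (lk M w) * lk f M * 1) = sg M (of_nat (lk M w) * lk f M)"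
  proof (cases "lk M w = 0")
    case True
    then show ?thesis by simp
  next
    case False
    then show ?thesis by (simp add: minus_add_single)
  qed
qed simp

lemma pderiv_nz:
  assumes "N \<in> ks f" "lk N w > 0"
  shows "pderiv_var w (f :: 'k::field_char_0 dpoly) \<noteq> 0"
proof
  assume "pderiv_var w f = 0"
  then have "lk (pderiv_var w f * Xp w 1) N = 0" by simp
  then have "of_nat (lk N w) * lk f N = (0::'k)" unfolding pderiv_times_X
    using assms by (simp add: lk_sum_single)
  then show False using assms by (simp add: in_keys_iff)
qed


lemma keys_minus_sub: "ks (M - N) \<subseteq> ks (M :: dvar \<Rightarrow>\<^sub>0 nat)"
  by (auto simp: in_keys_iff lookup_minus)

lemma keys_shift_mono: "ks ((M::dvar \<Rightarrow>\<^sub>0 nat) - sg v 1 + sg s 1) \<subseteq> ks M \<union> {s}"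
  using keys_add_nat[of "M - sg v 1" "sg s 1"] keys_minus_sub[of M "sg v 1"] by auto

lemma inner_split:
  fixes F :: "dvar \<Rightarrow> 'k::comm_ring_1 dpoly"
  assumes "u \<notin> ks M \<Longrightarrow> F u = 0"
  shows "(\<Sum>v\<in>ks M. F v) = F u + (\<Sum>v\<in>ks M - {u}. F v)"
proof (cases "u \<in> ks M")
  case True
  then show ?thesis by (simp add: sum.remove)
next
  case False
  then show ?thesis using assms by simp
qed

lemma Dlin:
  fixes g :: "'k::comm_ring_1 dpoly"
  assumes vars_le: "\<forall>t\<in>vars g. vle t u"
    and valid: "\<forall>t\<in>vars g. valid_var n m t" and vu: "valid_var n m u" and k: "k < m"
  shows "\<exists>T. deriv_poly D k g = pderiv_var u g * Xp (shift_var k u) 1 + T \<and>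
           vars T \<subseteq> {t. var_less t (shift_var k u) \<and> valid_var n m t}"
proof -
  let ?su = "shift_var k u"
  define F where "F M v = sg (M - sg v 1 + sg (shift_var k v) 1) (of_nat (lk M v) * lk g M)" for M v
  define B where "B M = sg M (D k (lk g M)) + (\<Sum>v\<in>ks M - {u}. F M v)" for M
  define T where "T = (\<Sum>M\<in>ks g. B M)"
  have "deriv_poly D k g = (\<Sum>M\<in>ks g. sg M (D k (lk g M)) + (\<Sum>v\<in>ks M. F M v))"
    unfolding deriv_poly_def F_def by simp
  also have "\<dots> = (\<Sum>M\<in>ks g. F M u + B M)"
  proof (rule sum.cong)
    fix M assume "M \<in> ks g"
    have "(\<Sum>v\<in>ks M. F M v) = F M u + (\<Sum>v\<in>ks M - {u}. F M v)"
      by (rule inner_split) (simp add: F_def in_keys_iff)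
    then show "sg M (D k (lk g M)) + (\<Sum>v\<in>ks M. F M v) = F M u + B M"
      by (simp add: B_def algebra_simps)
  qed simp
  also have "\<dots> = (\<Sum>M\<in>ks g. F M u) + T" by (simp add: sum.distrib T_def)
  also have "(\<Sum>M\<in>ks g. F M u) = pderiv_var u g * Xp ?su 1"
    unfolding pderiv_var_def Xp_def sum_distrib_right mult_single F_def by simp
  finally have eq: "deriv_poly D k g = pderiv_var u g * Xp ?su 1 + T" .
  have lenu: "length (snd u) = m" using vu by (simp add: valid_var_def)
  have good: "var_less t ?su \<and> valid_var n m t" if "t \<in> ks M" "M \<in> ks g" for t M
  proof -
    have tv: "t \<in> vars g" using that by (auto simp: vars_def)
    show ?thesis using vars_le tv valid vle_vl_trans[OF _ vl_shift[of k u]] lenu k by auto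
  qed
  have vT: "vars T \<subseteq> {t. var_less t ?su \<and> valid_var n m t}"
  proof
    fix t assume "t \<in> vars T"
    then obtain M where M: "M \<in> ks g" "t \<in> vars (B M)"
      using vars_sum[of B "ks g"] unfolding T_def by blast
    then have "t \<in> vars (sg M (D k (lk g M))) \<or> t \<in> vars (\<Sum>v\<in>ks M - {u}. F M v)"
      using vars_add unfolding B_def by blast
    then show "t \<in> {t. var_less t ?su \<and> valid_var n m t}"
    proof
      assume "t \<in> vars (sg M (D k (lk g M)))"
      then have "t \<in> ks M" using vars_single by blast
      then show ?thesis using good M by blast
    next
      assume "t \<in> vars (\<Sum>v\<in>ks M - {u}. F M v)"
      then obtain v where v: "v \<in> ks M" "v \<noteq> u" "t \<in> vars (F M v)" using vars_sum by blast
      then have "t \<in> ks M \<or> t = shift_var k v"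
        using vars_single keys_shift_mono unfolding F_def by blast
      then show ?thesis
      proof
        assume "t \<in> ks M" then show ?thesis using good M by blast
      next
        assume t: "t = shift_var k v"
        have vg: "v \<in> vars g" using v M by (auto simp: vars_def)
        then have "var_less v u" using vars_le v(2) by (auto simp: vle_def)
        moreover have "length (snd v) = m" using valid vg by (simp add: valid_var_def)
        ultimately have "var_less t ?su" using vl_shift_mono[of v u k] lenu k t by simp
        moreover have "valid_var n m t" using valid vg t valid_shift by blast
        ultimately show ?thesis by simp
      qed
    qed
  qed
  show ?thesis using eq vT by blast
qed

lemma pderiv_add: "pderiv_var u (f + g) = pderiv_var u f + pderiv_var u (g::'k::comm_ring_1 dpoly)"
  unfolding pderiv_var_def
  by (rule setsum_keys_plus_distrib) (simp_all add: distrib_left single_add)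

lemma pderiv_zero [simp]: "pderiv_var u (0::'k::comm_ring_1 dpoly) = 0"
  by (simp add: pderiv_var_def)

lemma pderiv_single: "pderiv_var u (sg N c) = sg (N - sg u 1) (of_nat (lk N u) * (c::'k::comm_ring_1))"
  by (simp add: pderiv_var_def)

lemma pderiv_sum: "pderiv_var u (sum F A) = (\<Sum>a\<in>A. pderiv_var u (F a :: 'k::comm_ring_1 dpoly))"
proof (induction A rule: infinite_finite_induct)
  case (insert x F)
  then show ?case by (simp add: pderiv_add)
qed auto

lemma pderiv_novar:
  assumes "u \<notin> vars T"
  shows "pderiv_var u (T::'k::comm_ring_1 dpoly) = 0"
  unfolding pderiv_var_def
proof (rule sum.neutral, rule ballI)
  fix M assume "M \<in> ks T"
  then have "lk M u = 0" using assms by (auto simp: vars_def in_keys_iff)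
  then show "sg (M - sg u 1) (of_nat (lk M u) * lk T M) = 0" by simp
qed

lemma pderiv_lin:
  assumes "u \<notin> vars S" "u \<notin> vars T"
  shows "pderiv_var u (S * Xp u 1 + T) = (S::'k::comm_ring_1 dpoly)"
proof -
  have "S * Xp u 1 = (\<Sum>M\<in>ks S. sg M (lk S M)) * Xp u 1" by (subst poly_expand[of S]) simp
  also have "\<dots> = (\<Sum>M\<in>ks S. sg (M + sg u 1) (lk S M))"
    unfolding Xp_def sum_distrib_right mult_single by simp
  finally have e: "S * Xp u 1 = (\<Sum>M\<in>ks S. sg (M + sg u 1) (lk S M))" .
  have "pderiv_var u (S * Xp u 1) = (\<Sum>M\<in>ks S. sg M (lk S M))"
    unfolding e pderiv_sum pderiv_single
  proof (rule sum.cong)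
    fix M assume "M \<in> ks S"
    then have "lk M u = 0" using assms by (auto simp: vars_def in_keys_iff)
    moreover have "M + sg u 1 - sg u 1 = M"
      by (rule poly_mapping_eqI) (simp add: lookup_add lookup_minus)
    ultimately show "sg (M + sg u 1 - sg u 1) (of_nat (lk (M + sg u 1) u) * lk S M) = sg M (lk S M)"
      by (simp add: lookup_add)
  qed simp
  also have "\<dots> = S" by (rule poly_expand[symmetric])
  finally show ?thesis using pderiv_novar[OF assms(2)] by (simp add: pderiv_add)
qed


definition linform :: "nat \<Rightarrow> nat \<Rightarrow> 'k::comm_ring_1 dpoly \<Rightarrow> dvar \<Rightarrow> 'k dpoly \<Rightarrow> bool" where
  "linform n m S u g \<longleftrightarrow> (\<exists>T. g = S * Xp u 1 + T \<and> vars T \<subseteq> {t. var_less t u \<and> valid_var n m t})"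

definition dstate :: "nat \<Rightarrow> nat \<Rightarrow> 'k::comm_ring_1 dpoly \<Rightarrow> dvar \<Rightarrow> 'k dpoly \<Rightarrow> bool" where
  "dstate n m f u g \<longleftrightarrow> valid_var n m u \<and>
     ((g = f \<and> u = leader f) \<or> (var_less (leader f) u \<and> linform n m (separant f) u g))"

lemma vars_separant: "vars (separant f) \<subseteq> vars f"
  unfolding separant_def by (rule vars_pderiv)

lemma vars_lin:
  assumes "g = S * Xp u 1 + T"
  shows "vars g \<subseteq> vars S \<union> vars T \<union> {u}"
  using assms vars_add[of "S * Xp u 1" T] vars_mult[of S "Xp u 1"] vars_Xp[of u 1] by blast

lemma dstate_vars:
  assumes "dstate n m f u g" "nonconstant f" "f \<in> Kx n m"
  shows "vars g \<subseteq> {t. vle t u \<and> valid_var n m t}"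
proof -
  have lv: "\<And>t. t \<in> vars f \<Longrightarrow> vle t (leader f) \<and> valid_var n m t"
    using leader_props[OF assms(2,3)] valid_of_Kx[OF assms(3)] by blast
  consider "g = f" "u = leader f" | "var_less (leader f) u" "linform n m (separant f) u g"
    using assms(1) unfolding dstate_def by blast
  then show ?thesis
  proof cases
    case 1
    then show ?thesis using lv by blast
  next
    case 2
    then obtain T where T: "g = separant f * Xp u 1 + T" "vars T \<subseteq> {t. var_less t u \<and> valid_var n m t}"
      unfolding linform_def by blast
    show ?thesis
    proof
      fix t assume "t \<in> vars g"
      then have "t \<in> vars (separant f) \<or> t \<in> vars T \<or> t = u" using vars_lin[OF T(1)] by blast
      then show "t \<in> {t. vle t u \<and> valid_var n m t}"
      proof (elim disjE)
        assume "t \<in> vars (separant f)"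
        then have "t \<in> vars f" using vars_separant by blast
        then have "var_less t u" using lv 2(1) vle_vl_trans by blast
        moreover have "valid_var n m t" using lv \<open>t \<in> vars f\<close> by blast
        ultimately show ?thesis by (simp add: vle_def)
      next
        assume "t \<in> vars T" then show ?thesis using T(2) by (auto simp: vle_def)
      next
        assume "t = u" then show ?thesis using assms(1) by (simp add: dstate_def)
      qed
    qed
  qed
qed

lemma dstate_step:
  assumes "dstate n m f u g" "nonconstant f" "f \<in> Kx n m" "k < m"
  shows "dstate n m f (shift_var k u) (deriv_poly D k g)"
proof -
  have vu: "valid_var n m u" using assms(1) by (simp add: dstate_def)
  have lenu: "length (snd u) = m" using vu by (simp add: valid_var_def)
  have vg: "vars g \<subseteq> {t. vle t u \<and> valid_var n m t}" by (rule dstate_vars[OF assms(1-3)])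
  obtain T where T: "deriv_poly D k g = pderiv_var u g * Xp (shift_var k u) 1 + T"
    "vars T \<subseteq> {t. var_less t (shift_var k u) \<and> valid_var n m t}"
    using Dlin[of g u n m k D] vg vu assms(4) by blast
  have lsu: "var_less u (shift_var k u)" using vl_shift[of k u] lenu assms(4) by simp
  have pd: "pderiv_var u g = separant f \<and> var_less (leader f) u \<or> (g = f \<and> u = leader f)"
  proof -
    consider "g = f" "u = leader f" | "var_less (leader f) u" "linform n m (separant f) u g"
      using assms(1) unfolding dstate_def by blast
    then show ?thesis
    proof cases
      case 2
      then obtain T0 where T0: "g = separant f * Xp u 1 + T0" "vars T0 \<subseteq> {t. var_less t u \<and> valid_var n m t}"
        unfolding linform_def by blast
      have "u \<notin> vars T0" using T0(2) vl_irrefl by blast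
      moreover have "u \<notin> vars (separant f)"
      proof
        assume "u \<in> vars (separant f)"
        then have "u \<in> vars f" using vars_separant by blast
        then have "vle u (leader f)" using leader_props[OF assms(2,3)] by blast
        then show False using 2(1) vle_vl_trans vl_irrefl by blast
      qed
      ultimately have "pderiv_var u g = separant f" using T0(1) pderiv_lin by blast
      then show ?thesis using 2 by blast
    qed blast
  qed
  have "var_less (leader f) (shift_var k u) \<and> pderiv_var u g = separant f"
  proof (cases "g = f \<and> u = leader f")
    case True
    then show ?thesis using lsu by (simp add: separant_def)
  next
    case False
    then have "pderiv_var u g = separant f" "var_less (leader f) u" using pd by auto
    then show ?thesis using lsu vl_trans by blast
  qed
  then show ?thesis using T valid_shift[OF vu] unfolding dstate_def linform_def by auto
qed

lemma dstate_pow: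
  assumes "dstate n m f u g" "nonconstant f" "f \<in> Kx n m" "k < m"
  shows "dstate n m f ((shift_var k ^^ j) u) ((deriv_poly D k ^^ j) g)"
proof (induction j)
  case 0
  then show ?case using assms(1) by simp
next
  case (Suc j)
  then show ?case using dstate_step[OF Suc.IH assms(2-4)] by simp
qed

lemma dstate_foldr:
  assumes "dstate n m f u g" "nonconstant f" "f \<in> Kx n m" "\<forall>k\<in>set kl. k < m"
  shows "dstate n m f (foldr (\<lambda>k u. (shift_var k ^^ (\<xi> ! k)) u) kl u)
                      (foldr (\<lambda>k g. (deriv_poly D k ^^ (\<xi> ! k)) g) kl g)"
  using assms(4)
proof (induction kl)
  case Nil
  then show ?case using assms(1) by simp
next
  case (Cons a kl)
  then show ?case using dstate_pow[OF _ assms(2,3)] by simp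
qed

lemma shift_pow:
  assumes "k < length (snd u)"
  shows "(shift_var k ^^ j) u = (fst u, (snd u)[k := snd u ! k + j])"
proof (induction j)
  case 0
  then show ?case by simp
next
  case (Suc j)
  then show ?case using assms by (simp add: shift_var_def)
qed

lemma shift_foldr:
  assumes "distinct kl" "\<forall>k\<in>set kl. k < length (snd u)"
  shows "foldr (\<lambda>k u. (shift_var k ^^ (\<xi> ! k)) u) kl u =
         (fst u, map (\<lambda>i. snd u ! i + (if i \<in> set kl then \<xi> ! i else 0)) [0..<length (snd u)])"
  using assms
proof (induction kl)
  case Nil
  then show ?case by (simp add: map_nth)
next
  case (Cons a kl)
  let ?L = "map (\<lambda>i. snd u ! i + (if i \<in> set kl then \<xi> ! i else 0)) [0..<length (snd u)]"
  have IH: "foldr (\<lambda>k u. (shift_var k ^^ (\<xi> ! k)) u) kl u = (fst u, ?L)" using Cons by simp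
  have a: "a < length (snd u)" "a \<notin> set kl" using Cons.prems by auto
  have "foldr (\<lambda>k u. (shift_var k ^^ (\<xi> ! k)) u) (a # kl) u = (shift_var a ^^ (\<xi> ! a)) (fst u, ?L)"
    using IH by simp
  also have "\<dots> = (fst u, ?L[a := ?L ! a + \<xi> ! a])" using shift_pow[of a "(fst u, ?L)"] a by simp
  also have "?L[a := ?L ! a + \<xi> ! a] = map (\<lambda>i. snd u ! i + (if i \<in> set (a # kl) then \<xi> ! i else 0)) [0..<length (snd u)]"
    by (rule nth_equalityI) (use a in \<open>auto simp: nth_list_update\<close>)
  finally show ?case .
qed

lemma dpow_proper:
  fixes f :: "'k::comm_ring_1 dpoly"
  assumes "nonconstant f" "f \<in> Kx n m" "valid_var n m w" "proper_deriv_of w (leader f)"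
  defines "\<xi> \<equiv> map (\<lambda>i. snd w ! i - snd (leader f) ! i) [0..<m]"
  shows "length \<xi> = m \<and> linform n m (separant f) w (dpow D \<xi> f) \<and> var_less (leader f) w \<and>
         vars (dpow D \<xi> f) \<subseteq> {t. vle t w \<and> valid_var n m t}"
proof -
  let ?v = "leader f"
  have vv: "valid_var n m ?v" using leader_props(1)[OF assms(1,2)] valid_of_Kx[OF assms(2)] by blast
  have lenv: "length (snd ?v) = m" using vv by (simp add: valid_var_def)
  have lenw: "length (snd w) = m" using assms(3) by (simp add: valid_var_def)
  have lx: "length \<xi> = m" by (simp add: \<xi>_def)
  have st0: "dstate n m f ?v f" using vv by (simp add: dstate_def)
  have st: "dstate n m f (foldr (\<lambda>k u. (shift_var k ^^ (\<xi> ! k)) u) [0..<length \<xi>] ?v) (dpow D \<xi> f)"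
    unfolding dpow_def using dstate_foldr[OF st0 assms(1,2), of "[0..<length \<xi>]" \<xi> D] lx by simp
  have "foldr (\<lambda>k u. (shift_var k ^^ (\<xi> ! k)) u) [0..<length \<xi>] ?v =
        (fst ?v, map (\<lambda>i. snd ?v ! i + (if i \<in> set [0..<length \<xi>] then \<xi> ! i else 0)) [0..<length (snd ?v)])"
    by (rule shift_foldr) (use lx lenv in auto)
  also have "\<dots> = w"
  proof -
    have "map (\<lambda>i. snd ?v ! i + (if i \<in> set [0..<length \<xi>] then \<xi> ! i else 0)) [0..<length (snd ?v)] = snd w"
      by (rule nth_equalityI) (use assms(4) lenv lenw lx in \<open>auto simp: \<xi>_def proper_deriv_of_def\<close>)
    moreover have "fst ?v = fst w" using assms(4) by (simp add: proper_deriv_of_def)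
    ultimately show ?thesis by (cases w) simp
  qed
  finally have st': "dstate n m f w (dpow D \<xi> f)" using st by simp
  have ne: "w \<noteq> ?v" using assms(4) by (auto simp: proper_deriv_of_def)
  then have "var_less ?v w \<and> linform n m (separant f) w (dpow D \<xi> f)" using st' by (auto simp: dstate_def)
  then show ?thesis using lx dstate_vars[OF st' assms(1,2)] by blast
qed


lemma rank_less_irrefl: "\<not> rank_less a a"
  by (simp add: rank_less_def vl_irrefl)

lemma leader_valid: "nonconstant f \<Longrightarrow> f \<in> Kx n m \<Longrightarrow> valid_var n m (leader f)"
  using leader_props(1) valid_of_Kx by blast

lemma reduced_back:
  fixes f g :: "'k::zero dpoly"
  assumes f: "nonconstant f" "f \<in> Kx n m" and g: "nonconstant g" "g \<in> Kx n m"
    and nl: "\<not> rank_less (rank g) (rank f)" and red: "reduced_wrt g f"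
  shows "reduced_wrt f g"
proof -
  have lf: "length (snd (leader f)) = m" using leader_valid[OF f] by (simp add: valid_var_def)
  have lg: "length (snd (leader g)) = m" using leader_valid[OF g] by (simp add: valid_var_def)
  have dlt: "deg_in (leader f) g < deg_in (leader f) f" using red by (simp add: reduced_wrt_def)
  have ne: "leader f \<noteq> leader g"
  proof
    assume e: "leader f = leader g"
    then have "rank_less (rank g) (rank f)" using dlt by (simp add: rank_def rank_less_def)
    then show False using nl by simp
  qed
  have "\<not> var_less (leader g) (leader f)" using nl by (simp add: rank_def rank_less_def)
  then have vl: "var_less (leader f) (leader g)" using vl_total[of "leader f" "leader g"] lf lg ne by auto
  have allv: "var_less w (leader g)" if "w \<in> vars f" for w
    using leader_props(2)[OF f that] vl vle_vl_trans by blast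
  have p1: "\<forall>w\<in>vars f. \<not> proper_deriv_of w (leader g)"
    using allv proper_deriv_less vl_asym by blast
  have "leader g \<notin> vars f" using allv vl_irrefl by blast
  then have "deg_in (leader g) f = 0" using in_vars_deg_pos deg_pos_in_vars by blast
  then have "deg_in (leader g) f < deg_in (leader g) g" using deg_leader_pos[OF g] by simp
  then show ?thesis using p1 by (simp add: reduced_wrt_def)
qed

lemma not_reduced_self:
  fixes f :: "'k::zero dpoly"
  shows "\<not> reduced_wrt f f"
  by (simp add: reduced_wrt_def)

lemma const_unit:
  fixes g :: "'k::field dpoly"
  assumes "vars g = {}" "g \<noteq> 0"
  shows "sg 0 (inverse (lk g 0)) * g = 1" "sg 0 (inverse (lk g 0)) \<in> Kx n m"
proof -
  have g: "g = sg 0 (lk g 0)" by (rule constant_poly[OF assms(1)])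
  have "lk g 0 \<noteq> 0" using assms(2) g by (metis single_zero)
  then show "sg 0 (inverse (lk g 0)) * g = 1"
    by (subst g) (simp add: mult_single)
  show "sg 0 (inverse (lk g 0)) \<in> Kx n m"
    unfolding Kx_iff using vars_single[of 0 "inverse (lk g 0)"] by simp
qed

lemma no_reduced_in_P:
  fixes g :: "'k::field dpoly"
  assumes cs: "char_set L P" and pr: "is_prime_ideal_in (Kx n m) P"
    and gP: "g \<in> P" and gnz: "g \<noteq> 0" and red: "\<forall>f\<in>set L. reduced_wrt g f"
  shows False
proof (cases "vars g = {}")
  case True
  have PK: "P \<subseteq> Kx n m" using pr by (simp add: is_prime_ideal_in_def is_ideal_in_def)
  have "sg 0 (inverse (lk g 0)) * g \<in> P"
    using pr const_unit(2)[OF True gnz] gP by (simp add: is_prime_ideal_in_def is_ideal_in_def)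
  then have "1 \<in> P" using const_unit(1)[OF True gnz] by simp
  then show False using pr by (simp add: is_prime_ideal_in_def)
next
  case False
  have PK: "P \<subseteq> Kx n m" using pr by (simp add: is_prime_ideal_in_def is_ideal_in_def)
  have ar: "autoreduced L" and LP: "set L \<subseteq> P" using cs by (auto simp: char_set_def)
  have gK: "g \<in> Kx n m" using gP PK by blast
  have gnc: "nonconstant g" using False by (simp add: nonconstant_def)
  have LK: "\<forall>f\<in>set L. f \<in> Kx n m \<and> nonconstant f" using LP PK ar by (auto simp: autoreduced_def)
  define Q where "Q f = (\<not> rank_less (rank g) (rank f))" for f :: "'k dpoly"
  define j where "j = length (takeWhile Q L)"
  define L' where "L' = take j L @ [g]"
  have tk: "take j L = takeWhile Q L" unfolding j_def by (rule takeWhile_eq_take[symmetric])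
  have Qt: "\<forall>f\<in>set (take j L). Q f"
  proof
    fix f assume "f \<in> set (take j L)"
    then have "f \<in> set (takeWhile Q L)" using tk by simp
    then show "Q f" by (rule set_takeWhileD[THEN conjunct2])
  qed
  have jle: "j \<le> length L" by (simp add: j_def length_takeWhile_le)
  have gnL: "g \<notin> set L" using red not_reduced_self by blast
  have dist: "distinct L" and srt: "sorted_wrt (\<lambda>f g. \<not> rank_less (rank g) (rank f)) L"
    and mut: "\<forall>f\<in>set L. \<forall>g\<in>set L. f \<noteq> g \<longrightarrow> reduced_wrt g f"
    using ar by (auto simp: autoreduced_def)
  have sub: "set (take j L) \<subseteq> set L" by (rule set_take_subset)
  have "autoreduced L'"
    unfolding autoreduced_def
  proof (intro conjI)
    show "distinct L'" using dist gnL sub by (auto simp: L'_def)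
    show "\<forall>f\<in>set L'. nonconstant f" using LK sub gnc by (auto simp: L'_def)
    show "sorted_wrt (\<lambda>f g. \<not> rank_less (rank g) (rank f)) L'"
      unfolding L'_def sorted_wrt_append using sorted_wrt_take[OF srt] Qt by (auto simp: Q_def)
    show "\<forall>f\<in>set L'. \<forall>h\<in>set L'. f \<noteq> h \<longrightarrow> reduced_wrt h f"
    proof (intro ballI impI)
      fix f h assume f: "f \<in> set L'" and h: "h \<in> set L'" and fh: "f \<noteq> h"
      consider "f \<in> set (take j L)" "h \<in> set (take j L)" | "f = g" "h \<in> set (take j L)"
        | "h = g" "f \<in> set (take j L)" | "f = g" "h = g"
        using f h by (auto simp: L'_def)
      then show "reduced_wrt h f"
      proof cases
        case 1 then show ?thesis using mut sub fh by blast
      next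
        case 2
        have "reduced_wrt h g"
          by (rule reduced_back[of h n m g]) (use LK sub 2 gnc gK Qt red Q_def in auto)
        then show ?thesis using 2 by simp
      next
        case 3 then show ?thesis using red sub by auto
      next
        case 4 then show ?thesis using fh by simp
      qed
    qed
  qed
  moreover have "set L' \<subseteq> P" using LP sub gP by (auto simp: L'_def)
  moreover have "auto_less L' L"
  proof (cases "j < length L")
    case True
    have "rank_less (rank g) (rank (L ! j))"
      using nth_length_takeWhile[of Q L] True by (simp add: j_def Q_def)
    then show ?thesis unfolding auto_less_def
      by (intro disjI1 exI[of _ j]) (use True in \<open>auto simp: L'_def nth_append min_def\<close>)
  next
    case False
    then have "j = length L" using jle by simp
    then show ?thesis unfolding auto_less_def
      by (intro disjI2) (auto simp: L'_def nth_append)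
  qed
  ultimately show False using cs by (auto simp: char_set_def)
qed


lemma vars_initial: "vars (initial f) \<subseteq> vars f - {leader f}"
  unfolding initial_def by (rule vars_coeff_in)

lemma initial_nz:
  assumes "nonconstant f" "f \<in> Kx n m"
  shows "initial (f::'k::comm_ring_1 dpoly) \<noteq> 0"
proof -
  obtain M where "M \<in> ks f" "lk M (leader f) = deg_in (leader f) f"
    using deg_in_attained deg_leader_pos[OF assms] by blast
  then show ?thesis unfolding initial_def by (rule coeff_in_nz)
qed

lemma separant_nz:
  assumes "nonconstant f" "f \<in> Kx n m"
  shows "separant (f::'k::field_char_0 dpoly) \<noteq> 0"
proof -
  obtain M where "M \<in> ks f" "lk M (leader f) = deg_in (leader f) f"
    using deg_in_attained deg_leader_pos[OF assms] by blast
  then show ?thesis unfolding separant_def using deg_leader_pos[OF assms] pderiv_nz by metis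
qed

lemma degle_initial: "degle u k f \<Longrightarrow> degle u k (initial f)"
  unfolding initial_def by (rule degle_coeff_in)

lemma degle_separant: "degle u k f \<Longrightarrow> degle u k (separant f)"
  unfolding separant_def by (rule degle_pderiv)

lemma init_sep_reduced:
  fixes L :: "'k::comm_ring_1 dpoly list"
  assumes ar: "autoreduced L" and LK: "set L \<subseteq> Kx n m" and f: "f \<in> set L" and f': "f' \<in> set L"
    and c: "c = initial f \<or> c = separant f"
  shows "reduced_wrt c f'"
proof -
  have fnc: "nonconstant f" "f \<in> Kx n m" using ar f LK by (auto simp: autoreduced_def)
  have f'nc: "nonconstant f'" "f' \<in> Kx n m" using ar f' LK by (auto simp: autoreduced_def)
  have vc: "vars c \<subseteq> vars f" using c vars_initial vars_separant by blast
  show ?thesis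
  proof (cases "f' = f")
    case True
    have p1: "\<forall>w\<in>vars c. \<not> proper_deriv_of w (leader f)"
    proof (intro ballI notI)
      fix w assume "w \<in> vars c" "proper_deriv_of w (leader f)"
      then have wf: "w \<in> vars f" using vc by blast
      have "vle w (leader f)" by (rule leader_props(2)[OF fnc wf])
      moreover have "var_less (leader f) w" by (rule proper_deriv_less) fact
      ultimately show False using vle_vl_trans vl_irrefl by blast
    qed
    have d: "deg_in (leader f) f > 0" by (rule deg_leader_pos[OF fnc])
    have "deg_in (leader f) c < deg_in (leader f) f"
      using c
    proof
      assume ci: "c = initial f"
      have "leader f \<notin> vars c" using vars_initial ci by blast
      then have "deg_in (leader f) c = 0" using in_vars_deg_pos deg_pos_in_vars by blast
      then show ?thesis using d by simp
    next
      assume cs: "c = separant f"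
      have "degle (leader f) (deg_in (leader f) f - 1) c"
        unfolding cs separant_def by (rule degle_pderiv_self[OF degle_deg_in])
      then have "deg_in (leader f) c \<le> deg_in (leader f) f - 1" using deg_in_le_iff by blast
      then show ?thesis using d by simp
    qed
    then show ?thesis using p1 True by (simp add: reduced_wrt_def)
  next
    case False
    then have rf: "reduced_wrt f f'" using ar f f' by (auto simp: autoreduced_def)
    have dd: "degle (leader f') (deg_in (leader f') f) f" by (rule degle_deg_in)
    have "degle (leader f') (deg_in (leader f') f) c"
      using c
    proof
      assume "c = initial f" then show ?thesis using degle_initial[OF dd] by simp
    next
      assume "c = separant f" then show ?thesis using degle_separant[OF dd] by simp
    qed
    then have "deg_in (leader f') c \<le> deg_in (leader f') f" using deg_in_le_iff by blast
    then show ?thesis using rf vc by (auto simp: reduced_wrt_def)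
  qed
qed

lemma prime_mult_notin:
  assumes pr: "is_prime_ideal_in R P" and "a \<in> R" "b \<in> R" "a \<notin> P" "b \<notin> P"
  shows "a * b \<notin> P"
proof
  assume "a * b \<in> P"
  then have "a \<in> P \<or> b \<in> P" using pr assms(2,3) unfolding is_prime_ideal_in_def by blast
  then show False using assms(4,5) by blast
qed

lemma Kx_mult: "a \<in> Kx n m \<Longrightarrow> b \<in> Kx n m \<Longrightarrow> a * b \<in> (Kx n m :: 'k::comm_ring_1 dpoly set)"
  unfolding Kx_iff using vars_mult[of a b] by (meson le_sup_iff order_trans)

lemma Kx_le_mult: "a \<in> Kx_le n m r \<Longrightarrow> b \<in> Kx_le n m r \<Longrightarrow> a * b \<in> (Kx_le n m r :: 'k::comm_ring_1 dpoly set)"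
  unfolding Kx_le_iff using vars_mult[of a b] by (meson le_sup_iff order_trans)

lemma Kx_one: "(1::'k::comm_ring_1 dpoly) \<in> Kx n m"
  by (simp add: Kx_iff)

lemma Kx_le_one: "(1::'k::comm_ring_1 dpoly) \<in> Kx_le n m r"
  by (simp add: Kx_le_iff)

lemma Kx_prod: "(\<And>a. a \<in> A \<Longrightarrow> F a \<in> Kx n m) \<Longrightarrow> prod F A \<in> (Kx n m :: 'k::comm_ring_1 dpoly set)"
  unfolding Kx_iff using vars_prod[of F A] by (meson UN_least order_trans)

lemma Kx_le_prod: "(\<And>a. a \<in> A \<Longrightarrow> F a \<in> Kx_le n m r) \<Longrightarrow> prod F A \<in> (Kx_le n m r :: 'k::comm_ring_1 dpoly set)"
  unfolding Kx_le_iff using vars_prod[of F A] by (meson UN_least order_trans)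

lemma prod_notin_prime:
  fixes F :: "'a \<Rightarrow> 'k::comm_ring_1 dpoly"
  assumes pr: "is_prime_ideal_in (Kx n m) P" and fin: "finite A"
    and h: "\<And>a. a \<in> A \<Longrightarrow> F a \<in> Kx n m \<and> F a \<notin> P"
  shows "prod F A \<notin> P"
  using fin h
proof (induction A rule: finite_induct)
  case empty
  then show ?case using pr by (simp add: is_prime_ideal_in_def)
next
  case (insert x A)
  have pK: "prod F A \<in> Kx n m" by (rule Kx_prod) (use insert.prems in simp)
  have pP: "prod F A \<notin> P" by (rule insert.IH) (use insert.prems in simp)
  have Fx: "F x \<in> Kx n m" "F x \<notin> P" using insert.prems by simp_all
  have "F x * prod F A \<notin> P" by (rule prime_mult_notin[OF pr Fx(1) pK Fx(2) pP])
  then show ?case using insert.hyps by simp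
qed

lemma initial_Kx_le: "f \<in> Kx_le n m r \<Longrightarrow> initial f \<in> Kx_le n m r"
  unfolding Kx_le_iff using vars_initial by blast

lemma separant_Kx_le: "f \<in> Kx_le n m r \<Longrightarrow> separant f \<in> Kx_le n m r"
  unfolding Kx_le_iff using vars_separant by blast

lemma initial_Kx: "f \<in> Kx n m \<Longrightarrow> initial f \<in> Kx n m"
  unfolding Kx_iff using vars_initial by blast

lemma separant_Kx: "f \<in> Kx n m \<Longrightarrow> separant f \<in> Kx n m"
  unfolding Kx_iff using vars_separant by blast

lemma H_Kx_le:
  assumes "set L \<subseteq> Kx_le n m r"
  shows "H_of (set L) \<in> (Kx_le n m r :: 'k::comm_ring_1 dpoly set)"
  unfolding H_of_def
proof (rule Kx_le_prod)
  fix g assume "g \<in> set L"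
  then have gK: "g \<in> Kx_le n m r" using assms by blast
  show "initial g * separant g \<in> Kx_le n m r"
    by (rule Kx_le_mult[OF initial_Kx_le[OF gK] separant_Kx_le[OF gK]])
qed

lemma H_factor:
  fixes L :: "'k::comm_ring_1 dpoly list"
  assumes "f \<in> set L" "set L \<subseteq> Kx_le n m r"
  shows "\<exists>c'\<in>Kx_le n m r. H_of (set L) = initial f * c'"
        "\<exists>c'\<in>Kx_le n m r. H_of (set L) = separant f * c'"
proof -
  let ?R = "(\<Prod>g\<in>set L - {f}. initial g * separant g)"
  have R: "?R \<in> Kx_le n m r"
  proof (rule Kx_le_prod)
    fix g assume "g \<in> set L - {f}"
    then have gK: "g \<in> Kx_le n m r" using assms by blast
    show "initial g * separant g \<in> Kx_le n m r"
      by (rule Kx_le_mult[OF initial_Kx_le[OF gK] separant_Kx_le[OF gK]])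
  qed
  have H: "H_of (set L) = initial f * separant f * ?R"
    unfolding H_of_def using prod.remove[OF finite_set assms(1), of "\<lambda>g. initial g * separant g"]
    by (simp only: mult.assoc)
  have fK: "f \<in> Kx_le n m r" using assms by blast
  show "\<exists>c'\<in>Kx_le n m r. H_of (set L) = initial f * c'"
  proof (intro bexI[of _ "separant f * ?R"])
    show "H_of (set L) = initial f * (separant f * ?R)" using H by (simp add: mult.assoc)
    show "separant f * ?R \<in> Kx_le n m r" using Kx_le_mult[OF separant_Kx_le[OF fK] R] .
  qed
  show "\<exists>c'\<in>Kx_le n m r. H_of (set L) = separant f * c'"
  proof (intro bexI[of _ "initial f * ?R"])
    show "H_of (set L) = separant f * (initial f * ?R)" using H by (simp add: mult.left_commute mult.assoc)
    show "initial f * ?R \<in> Kx_le n m r" using Kx_le_mult[OF initial_Kx_le[OF fK] R] .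
  qed
qed

lemma H_notin:
  fixes L :: "'k::field_char_0 dpoly list"
  assumes cs: "char_set L P" and pr: "is_prime_ideal_in (Kx n m) P"
  shows "H_of (set L) \<notin> P"
proof -
  have PK: "P \<subseteq> Kx n m" using pr by (simp add: is_prime_ideal_in_def is_ideal_in_def)
  have ar: "autoreduced L" and LP: "set L \<subseteq> P" using cs unfolding char_set_def by blast+
  have LK: "set L \<subseteq> Kx n m" using LP PK by blast
  have notin: "c \<notin> P" if "f \<in> set L" "c = initial f \<or> c = separant f" for f c
  proof
    assume cP: "c \<in> P"
    have fnc1: "nonconstant f" using ar that(1) unfolding autoreduced_def by blast
    have fnc2: "f \<in> Kx n m" using LK that(1) by blast
    note fnc = fnc1 fnc2
    have "c \<noteq> 0" using that(2)
    proof
      assume "c = initial f" then show ?thesis using initial_nz[OF fnc] by simp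
    next
      assume "c = separant f" then show ?thesis using separant_nz[OF fnc] by simp
    qed
    moreover have "\<forall>f'\<in>set L. reduced_wrt c f'"
    proof
      fix f' assume "f' \<in> set L"
      then show "reduced_wrt c f'" by (rule init_sep_reduced[OF ar LK that(1) _ that(2)])
    qed
    ultimately show False by (rule no_reduced_in_P[OF cs pr cP])
  qed
  show ?thesis unfolding H_of_def
  proof (rule prod_notin_prime[OF pr])
    fix f assume f: "f \<in> set L"
    have fK: "f \<in> Kx n m" using f LK by blast
    have a: "initial f \<in> Kx n m" by (rule initial_Kx[OF fK])
    have b: "separant f \<in> Kx n m" by (rule separant_Kx[OF fK])
    have c: "initial f \<notin> P" using notin[OF f] by simp
    have d: "separant f \<notin> P" using notin[OF f] by simp
    show "initial f * separant f \<in> Kx n m \<and> initial f * separant f \<notin> P"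
      using Kx_mult[OF a b] prime_mult_notin[OF pr a b c d] by simp
  qed simp
qed


lemma gi_zero: "0 \<in> gen_ideal R S"
  unfolding gen_ideal_def by (rule CollectI, rule exI[of _ "[]"]) simp

lemma gi_add:
  assumes "x \<in> gen_ideal R S" "y \<in> gen_ideal R S"
  shows "x + y \<in> gen_ideal R S"
proof -
  obtain ps where ps: "x = sum_list (map (\<lambda>(a, g). a * g) ps)" "\<forall>(a, g)\<in>set ps. a \<in> R \<and> g \<in> S"
    using assms(1) unfolding gen_ideal_def by blast
  obtain qs where qs: "y = sum_list (map (\<lambda>(a, g). a * g) qs)" "\<forall>(a, g)\<in>set qs. a \<in> R \<and> g \<in> S"
    using assms(2) unfolding gen_ideal_def by blast
  have "x + y = sum_list (map (\<lambda>(a, g). a * g) (ps @ qs))" using ps qs by simp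
  moreover have "\<forall>(a, g)\<in>set (ps @ qs). a \<in> R \<and> g \<in> S" using ps qs by auto
  ultimately show ?thesis unfolding gen_ideal_def by blast
qed

lemma gi_gen:
  assumes "a \<in> R" "g \<in> S"
  shows "a * g \<in> gen_ideal R S"
proof -
  have "a * g = sum_list (map (\<lambda>(a, g). a * g) [(a, g)])" by simp
  moreover have "\<forall>(a', g')\<in>set [(a, g)]. a' \<in> R \<and> g' \<in> S" using assms by simp
  ultimately show ?thesis unfolding gen_ideal_def by blast
qed

lemma sum_list_scale:
  "r * sum_list (map (\<lambda>(a, g). a * g) ps) = sum_list (map (\<lambda>(a, g). a * g) (map (\<lambda>(a, g). (r * a, g)) ps))"
  for r :: "'a::comm_ring_1"
  by (induction ps) (auto simp: algebra_simps)

lemma gi_mult: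
  assumes "\<And>a. a \<in> R \<Longrightarrow> r * a \<in> R" "x \<in> gen_ideal R S"
  shows "r * x \<in> gen_ideal R (S :: 'a::comm_ring_1 set)"
proof -
  obtain ps where ps: "x = sum_list (map (\<lambda>(a, g). a * g) ps)" "\<forall>(a, g)\<in>set ps. a \<in> R \<and> g \<in> S"
    using assms(2) unfolding gen_ideal_def by blast
  have "r * x = sum_list (map (\<lambda>(a, g). a * g) (map (\<lambda>(a, g). (r * a, g)) ps))"
    using ps sum_list_scale by simp
  moreover have "\<forall>(a, g)\<in>set (map (\<lambda>(a, g). (r * a, g)) ps). a \<in> R \<and> g \<in> S"
    using ps assms(1) by auto
  ultimately show ?thesis unfolding gen_ideal_def by blast
qed

lemma gi_subset:
  assumes id: "is_ideal_in K P" and RK: "R \<subseteq> K" and SP: "S \<subseteq> P"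
  shows "gen_ideal R S \<subseteq> (P :: 'a::comm_ring_1 set)"
proof
  fix x assume "x \<in> gen_ideal R S"
  then obtain ps where ps: "x = sum_list (map (\<lambda>(a, g). a * g) ps)" "\<forall>(a, g)\<in>set ps. a \<in> R \<and> g \<in> S"
    unfolding gen_ideal_def by blast
  have "sum_list (map (\<lambda>(a, g). a * g) ps) \<in> P" using ps(2)
  proof (induction ps)
    case Nil
    then show ?case using id by (simp add: is_ideal_in_def)
  next
    case (Cons p ps)
    obtain a g where p: "p = (a, g)" by (cases p)
    have "a \<in> K" "g \<in> P" using Cons.prems p RK SP by auto
    then have "a * g \<in> P" using id by (simp add: is_ideal_in_def)
    moreover have "sum_list (map (\<lambda>(a, g). a * g) ps) \<in> P" using Cons by simp
    ultimately show ?case using id p by (simp add: is_ideal_in_def)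
  qed
  then show "x \<in> P" using ps by simp
qed

definition lowpart :: "dvar \<Rightarrow> nat \<Rightarrow> 'k::comm_ring_1 dpoly \<Rightarrow> 'k dpoly" where
  "lowpart w d g = g - coeff_in w d g * Xp w d"

lemma lk_lowpart: "lk (lowpart w d g) M = (if lk M w = d then 0 else lk g M)"
  by (simp add: lowpart_def lookup_minus lk_coeff_Xp)

lemma keys_lowpart: "ks (lowpart w d g) \<subseteq> ks g"
  by (auto simp: in_keys_iff lk_lowpart split: if_splits)

lemma vars_lowpart: "vars (lowpart w d g) \<subseteq> vars g"
  using keys_lowpart unfolding vars_def by blast

lemma degle_lowpart: "degle u k g \<Longrightarrow> degle u k (lowpart w d g)"
  using keys_lowpart unfolding degle_def by blast

lemma degle_lowpart_self:
  assumes "degle w d g"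
  shows "degle w (d - 1) (lowpart w d g)"
  unfolding degle_def
proof
  fix M assume M: "M \<in> ks (lowpart w d g)"
  then have "M \<in> ks g" using keys_lowpart by blast
  then have "lk M w \<le> d" using assms by (simp add: degle_def)
  moreover have "lk M w \<noteq> d" using M by (auto simp: in_keys_iff lk_lowpart)
  ultimately show "lk M w \<le> d - 1" by simp
qed

lemma lowpart_decomp: "g = coeff_in w d g * Xp w d + lowpart w d g"
  by (simp add: lowpart_def)

lemma pseudo_step:
  fixes g c h0 :: "'k::comm_ring_1 dpoly"
  assumes e1: "1 \<le> e" and ed: "e \<le> d" and dg: "degle w d g" and wc: "w \<notin> vars c"
    and dh0: "degle w (e - 1) h0"
  defines "g' \<equiv> c * g - coeff_in w d g * Xp w (d - e) * (c * Xp w e + h0)"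
  shows "degle w (d - 1) g'"
    and "\<And>u k. u \<noteq> w \<Longrightarrow> u \<notin> vars c \<Longrightarrow> u \<notin> vars h0 \<Longrightarrow> degle u k g \<Longrightarrow> degle u k g'"
proof -
  let ?C = "coeff_in w d g"
  have X: "Xp w (d - e) * Xp w e = (Xp w d :: 'k dpoly)" using Xp_mult[of w "d - e" e] ed by simp
  have X2: "?C * Xp w (d - e) * (c * Xp w e) = c * (?C * Xp w d)"
    by (simp add: X[symmetric] ac_simps)
  have eq: "g' = c * lowpart w d g - ?C * Xp w (d - e) * h0"
    unfolding g'_def lowpart_def using X2 by (simp add: algebra_simps)
  have c0: "degle w 0 c" using wc degle_0_iff by blast
  have C0: "degle w 0 ?C" using vars_coeff_in[of w d g] degle_0_iff by blast
  have "degle w (0 + (d - 1)) (c * lowpart w d g)"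
    by (rule degle_mult[OF c0 degle_lowpart_self[OF dg]])
  moreover have "degle w (0 + (d - e) + (e - 1)) (?C * Xp w (d - e) * h0)"
    by (rule degle_mult[OF degle_mult[OF C0 degle_Xp] dh0])
  ultimately show "degle w (d - 1) g'" unfolding eq
    using e1 ed by (intro degle_diff) (auto elim: degle_mono)
  fix u k assume u: "u \<noteq> w" "u \<notin> vars c" "u \<notin> vars h0" "degle u k g"
  have cu: "degle u 0 c" using u degle_0_iff by blast
  have hu: "degle u 0 h0" using u degle_0_iff by blast
  have "degle u (0 + k) (c * lowpart w d g)"
    by (rule degle_mult[OF cu degle_lowpart[OF u(4)]])
  moreover have "degle u (k + 0 + 0) (?C * Xp w (d - e) * h0)"
    by (rule degle_mult[OF degle_mult[OF degle_coeff_in[OF u(4)] degle_Xp_other[OF u(1)]] hu])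
  ultimately show "degle u k g'" unfolding eq by (intro degle_diff) simp_all
qed


definition rho :: "nat \<Rightarrow> nat \<Rightarrow> nat \<Rightarrow> dvar \<Rightarrow> nat" where
  "rho n m r u = card {t \<in> VS n m r. var_less t u}"

lemma rho_mono:
  assumes "var_less t u" "t \<in> VS n m r"
  shows "rho n m r t < rho n m r u"
proof -
  have "{s \<in> VS n m r. var_less s t} \<subset> {s \<in> VS n m r. var_less s u}"
  proof
    show "{s \<in> VS n m r. var_less s t} \<subseteq> {s \<in> VS n m r. var_less s u}"
      using assms(1) vl_trans by blast
    show "{s \<in> VS n m r. var_less s t} \<noteq> {s \<in> VS n m r. var_less s u}"
      using assms vl_irrefl by blast
  qed
  moreover have "finite {s \<in> VS n m r. var_less s u}" using finite_VS by simp
  ultimately show ?thesis unfolding rho_def using psubset_card_mono by blast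
qed

lemma rho_le:
  assumes "vle t u" "t \<in> VS n m r"
  shows "rho n m r t \<le> rho n m r u"
  using assms rho_mono[of t u n m r] by (auto simp: vle_def)

lemma VS_len: "t \<in> VS n m r \<Longrightarrow> length (snd t) = m"
  by (simp add: VS_def valid_var_def)

lemma rho_inj:
  assumes "t \<in> VS n m r" "u \<in> VS n m r" "rho n m r t = rho n m r u"
  shows "t = u"
proof (rule ccontr)
  assume "t \<noteq> u"
  then have "var_less t u \<or> var_less u t" using vl_total[of t u] VS_len assms by metis
  then show False using rho_mono[of t u n m r] rho_mono[of u t n m r] assms by auto
qed

definition redvar :: "'k::zero dpoly list \<Rightarrow> 'k dpoly \<Rightarrow> dvar \<Rightarrow> bool" where
  "redvar L g u \<longleftrightarrow> u \<in> vars g \<and>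
     ((\<exists>f\<in>set L. proper_deriv_of u (leader f)) \<or> (\<exists>f\<in>set L. u = leader f \<and> deg_in u f \<le> deg_in u g))"

definition RV :: "'k::zero dpoly list \<Rightarrow> 'k dpoly \<Rightarrow> dvar set" where
  "RV L g = {u. redvar L g u}"

lemma RV_sub: "RV L g \<subseteq> vars g"
  by (auto simp: RV_def redvar_def)

lemma finite_RV: "finite (RV L g)"
  using RV_sub finite_vars finite_subset by blast

definition topv :: "nat \<Rightarrow> nat \<Rightarrow> nat \<Rightarrow> 'k::zero dpoly list \<Rightarrow> 'k dpoly \<Rightarrow> dvar" where
  "topv n m r L g = (SOME u. u \<in> RV L g \<and> rho n m r u = Max (rho n m r ` RV L g))"

definition mu :: "nat \<Rightarrow> nat \<Rightarrow> nat \<Rightarrow> 'k::zero dpoly list \<Rightarrow> 'k dpoly \<Rightarrow> nat \<times> nat" where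
  "mu n m r L g = (if RV L g = {} then (0, 0)
     else (Suc (Max (rho n m r ` RV L g)), deg_in (topv n m r L g) g))"

lemma top_props:
  assumes ne: "RV L g \<noteq> {}" and gv: "vars g \<subseteq> VS n m r"
  shows "topv n m r L g \<in> RV L g" "rho n m r (topv n m r L g) = Max (rho n m r ` RV L g)"
    "\<And>u. u \<in> RV L g \<Longrightarrow> vle u (topv n m r L g)"
proof -
  have "Max (rho n m r ` RV L g) \<in> rho n m r ` RV L g"
    using ne finite_RV by (intro Max_in) auto
  then obtain u0 where u0: "u0 \<in> RV L g" "Max (rho n m r ` RV L g) = rho n m r u0" by (rule imageE)
  then have ex: "\<exists>u. u \<in> RV L g \<and> rho n m r u = Max (rho n m r ` RV L g)" by metis
  show t1: "topv n m r L g \<in> RV L g" and t2: "rho n m r (topv n m r L g) = Max (rho n m r ` RV L g)"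
    using someI_ex[OF ex] unfolding topv_def by blast+
  fix u assume u: "u \<in> RV L g"
  have uv: "u \<in> VS n m r" and tv: "topv n m r L g \<in> VS n m r" using u t1 RV_sub gv by blast+
  have "rho n m r u \<le> Max (rho n m r ` RV L g)"
    by (rule Max_ge) (use u finite_RV in auto)
  then have "rho n m r u \<le> rho n m r (topv n m r L g)" using t2 by simp
  then have "\<not> var_less (topv n m r L g) u" using rho_mono[OF _ tv] by fastforce
  then show "vle u (topv n m r L g)" using not_vl_vle VS_len uv tv by metis
qed

lemma RV_empty_reduced:
  assumes "RV L g = {}" "\<forall>f\<in>set L. nonconstant f \<and> f \<in> Kx n m"
  shows "\<forall>f\<in>set L. reduced_wrt g f"
proof
  fix f assume f: "f \<in> set L"
  have p1: "\<forall>w\<in>vars g. \<not> proper_deriv_of w (leader f)"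
    using assms(1) f unfolding RV_def redvar_def by blast
  have "deg_in (leader f) g < deg_in (leader f) f"
  proof (rule ccontr)
    assume "\<not> ?thesis"
    then have le: "deg_in (leader f) f \<le> deg_in (leader f) g" by simp
    have "deg_in (leader f) f > 0" using deg_leader_pos assms(2) f by blast
    then have "deg_in (leader f) g > 0" using le by linarith
    then have "leader f \<in> vars g" by (rule deg_pos_in_vars)
    then have "leader f \<in> RV L g" using f le unfolding RV_def redvar_def by blast
    then show False using assms(1) by simp
  qed
  then show "reduced_wrt g f" using p1 by (simp add: reduced_wrt_def)
qed

lemma mu_decrease:
  fixes g g' :: "'k::zero dpoly"
  assumes gv: "vars g \<subseteq> VS n m r" and g'v: "vars g' \<subseteq> VS n m r" and ne: "RV L g \<noteq> {}"
    and w: "w = topv n m r L g"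
    and dw: "deg_in w g' < deg_in w g"
    and du: "\<And>u. var_less w u \<Longrightarrow> deg_in u g' \<le> deg_in u g"
  shows "(mu n m r L g', mu n m r L g) \<in> less_than <*lex*> less_than"
proof -
  have wR: "w \<in> RV L g" and wmax: "rho n m r w = Max (rho n m r ` RV L g)"
    and wtop: "\<And>u. u \<in> RV L g \<Longrightarrow> vle u w" using top_props[OF ne gv] w by auto
  have wV: "w \<in> VS n m r" using wR RV_sub gv by blast
  have sub: "vle u w" if u: "u \<in> RV L g'" for u
  proof (rule ccontr)
    assume nv: "\<not> vle u w"
    have uV: "u \<in> VS n m r" using u RV_sub g'v by blast
    have wu: "var_less w u" using nv not_vl_vle[of w u] VS_len uV wV by (metis vle_def)
    have d: "deg_in u g' \<le> deg_in u g" by (rule du[OF wu])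
    have ug': "u \<in> vars g'" using u RV_sub by blast
    then have "deg_in u g > 0" using in_vars_deg_pos d by fastforce
    then have ug: "u \<in> vars g" using deg_pos_in_vars by blast
    have "redvar L g' u" using u by (simp add: RV_def)
    then have "redvar L g u" using ug d unfolding redvar_def by (meson order_trans)
    then have "vle u w" using wtop by (simp add: RV_def)
    then show False using nv by simp
  qed
  show ?thesis
  proof (cases "RV L g' = {}")
    case True
    then show ?thesis using ne by (simp add: mu_def)
  next
    case False
    have le: "Max (rho n m r ` RV L g') \<le> rho n m r w"
      using False finite_RV sub rho_le RV_sub g'v by (subst Max_le_iff) blast+
    show ?thesis
    proof (cases "Max (rho n m r ` RV L g') < rho n m r w")
      case True
      then show ?thesis using ne False wmax by (simp add: mu_def)
    next
      case eqc: False
      then have eq: "Max (rho n m r ` RV L g') = rho n m r w" using le by simp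
      have t': "topv n m r L g' \<in> RV L g'" "rho n m r (topv n m r L g') = Max (rho n m r ` RV L g')"
        using top_props[OF False g'v] by blast+
      have "topv n m r L g' = w"
        by (rule rho_inj[of _ n m r]) (use t' eq RV_sub g'v wV in auto)
      then show ?thesis using ne False eq wmax dw w by (simp add: mu_def)
    qed
  qed
qed


lemma Kx_le_diff: "a \<in> Kx_le n m r \<Longrightarrow> b \<in> Kx_le n m r \<Longrightarrow> a - b \<in> (Kx_le n m r :: 'k::comm_ring_1 dpoly set)"
  unfolding Kx_le_iff using vars_diff[of a b] by (meson le_sup_iff order_trans)

lemma Kx_le_power: "a \<in> Kx_le n m r \<Longrightarrow> a ^ k \<in> (Kx_le n m r :: 'k::comm_ring_1 dpoly set)"
  unfolding Kx_le_iff using vars_power[of a k] by (meson order_trans)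

lemma Kx_le_Xp: "w \<in> VS n m r \<Longrightarrow> Xp w k \<in> (Kx_le n m r :: 'k::comm_ring_1 dpoly set)"
  unfolding Kx_le_iff using vars_Xp[of w k] by blast

lemma Kx_le_coeff: "g \<in> Kx_le n m r \<Longrightarrow> coeff_in w d g \<in> (Kx_le n m r :: 'k::comm_ring_1 dpoly set)"
  unfolding Kx_le_iff using vars_coeff_in[of w d g] by blast

lemma Kx_minus_one: "(-1 :: 'k::comm_ring_1 dpoly) \<in> Kx n m"
  unfolding Kx_iff by simp

lemma ideal_diff:
  assumes "is_ideal_in (Kx n m) P" "a \<in> P" "b \<in> P"
  shows "a - b \<in> (P :: 'k::comm_ring_1 dpoly set)"
proof -
  have "(-1) * b \<in> P" using assms Kx_minus_one unfolding is_ideal_in_def by blast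
  then have "a + (-1) * b \<in> P" using assms unfolding is_ideal_in_def by blast
  then show ?thesis by simp
qed

lemma ideal_mult:
  assumes "is_ideal_in K P" "c \<in> K" "a \<in> P"
  shows "c * a \<in> P"
  using assms unfolding is_ideal_in_def by blast

lemma foldr_pow_P:
  assumes "\<And>k p. k \<in> set kl \<Longrightarrow> p \<in> P \<Longrightarrow> F k p \<in> P" "x \<in> P"
  shows "foldr (\<lambda>k g. (F k ^^ (\<xi> ! k)) g) kl x \<in> P"
  using assms
proof (induction kl)
  case Nil
  then show ?case by simp
next
  case (Cons a kl)
  have "foldr (\<lambda>k g. (F k ^^ (\<xi> ! k)) g) kl x \<in> P" using Cons by simp
  moreover have "\<And>j p. p \<in> P \<Longrightarrow> (F a ^^ j) p \<in> P"
  proof -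
    fix j p assume "p \<in> P"
    then show "(F a ^^ j) p \<in> P" by (induction j) (use Cons.prems in auto)
  qed
  ultimately show ?case by simp
qed

lemma dpow_P:
  assumes "prime_diff_ideal n m D P" "f \<in> P" "length \<xi> = m"
  shows "dpow D \<xi> f \<in> P"
  unfolding dpow_def
  by (rule foldr_pow_P) (use assms in \<open>auto simp: prime_diff_ideal_def\<close>)

lemma foldr_pow_zero:
  assumes "\<forall>k\<in>set kl. \<xi> ! k = 0"
  shows "foldr (\<lambda>k g. (F k ^^ (\<xi> ! k)) g) kl x = x"
  using assms by (induction kl) auto

lemma dpow_zero: "dpow D (replicate m 0) f = f"
  unfolding dpow_def by (rule foldr_pow_zero) simp

lemma red_finish:
  fixes g c h0 h c' :: "'k::comm_ring_1 dpoly"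
  assumes id: "is_ideal_in (Kx n m) P"
    and gR: "g \<in> Kx_le n m r" and gP: "g \<in> P" and wV: "w \<in> VS n m r"
    and e1: "1 \<le> e" and ed: "e \<le> deg_in w g"
    and wc: "w \<notin> vars c" and dh0: "degle w (e - 1) h0"
    and hdef: "h = c * Xp w e + h0"
    and above: "\<And>u. var_less w u \<Longrightarrow> u \<notin> vars c \<and> u \<notin> vars h0"
    and cR: "c \<in> Kx_le n m r" and hR: "h \<in> Kx_le n m r" and hP: "h \<in> P" and hS: "h \<in> S"
    and c'R: "c' \<in> Kx_le n m r" and Hc: "H = c * c'"
  shows "\<exists>g' c'. g' \<in> Kx_le n m r \<and> g' \<in> P \<and> c' \<in> Kx_le n m r \<and>
    H * g - c' * g' \<in> gen_ideal (Kx_le n m r) S \<and>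
    deg_in w g' < deg_in w g \<and> (\<forall>u. var_less w u \<longrightarrow> deg_in u g' \<le> deg_in u g)"
proof -
  let ?d = "deg_in w g"
  let ?C = "coeff_in w ?d g"
  let ?Q = "?C * Xp w (?d - e)"
  define g' where "g' = c * g - ?Q * h"
  have QR: "?Q \<in> Kx_le n m r" using Kx_le_mult[OF Kx_le_coeff[OF gR] Kx_le_Xp[OF wV]] .
  have g'R: "g' \<in> Kx_le n m r" unfolding g'_def
    by (rule Kx_le_diff[OF Kx_le_mult[OF cR gR] Kx_le_mult[OF QR hR]])
  have g'P: "g' \<in> P" unfolding g'_def
  proof (rule ideal_diff[OF id])
    show "c * g \<in> P" by (rule ideal_mult[OF id Kx_le_Kx[OF cR] gP])
    show "?Q * h \<in> P" by (rule ideal_mult[OF id Kx_le_Kx[OF QR] hP])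
  qed
  have eqH: "H * g - c' * g' = (c' * ?Q) * h" unfolding g'_def Hc by (simp add: algebra_simps)
  have "(c' * ?Q) * h \<in> gen_ideal (Kx_le n m r) S" by (rule gi_gen[OF Kx_le_mult[OF c'R QR] hS])
  then have inI: "H * g - c' * g' \<in> gen_ideal (Kx_le n m r) S" using eqH by simp
  have g'eq: "g' = c * g - ?C * Xp w (?d - e) * (c * Xp w e + h0)" unfolding g'_def hdef by simp
  have dg: "degle w ?d g" by (rule degle_deg_in)
  have "degle w (?d - 1) g'" unfolding g'eq by (rule pseudo_step(1)[OF e1 ed dg wc dh0])
  then have "deg_in w g' \<le> ?d - 1" using deg_in_le_iff by blast
  then have dlt: "deg_in w g' < ?d" using e1 ed by linarith
  have dother: "deg_in u g' \<le> deg_in u g" if "var_less w u" for u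
  proof -
    have "u \<noteq> w" using that vl_irrefl by blast
    then have "degle u (deg_in u g) g'" unfolding g'eq
      using pseudo_step(2)[OF e1 ed dg wc dh0, of u "deg_in u g"] above[OF that] degle_deg_in by blast
    then show ?thesis using deg_in_le_iff by blast
  qed
  show ?thesis using g'R g'P c'R inI dlt dother by blast
qed


lemma red_step:
  fixes L :: "'k::field_char_0 dpoly list"
  assumes pd: "prime_diff_ideal n m D P" and cs: "char_set L P" and LR: "set L \<subseteq> Kx_le n m r"
    and gR: "g \<in> Kx_le n m r" and gP: "g \<in> P" and ne: "RV L g \<noteq> {}"
  defines "w \<equiv> topv n m r L g"
  shows "\<exists>g' c'. g' \<in> Kx_le n m r \<and> g' \<in> P \<and> c' \<in> Kx_le n m r \<and>
    H_of (set L) * g - c' * g' \<in> gen_ideal (Kx_le n m r) (prolong n m D r (set L)) \<and>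
    deg_in w g' < deg_in w g \<and> (\<forall>u. var_less w u \<longrightarrow> deg_in u g' \<le> deg_in u g)"
proof -
  have pr: "is_prime_ideal_in (Kx n m) P" using pd by (simp add: prime_diff_ideal_def)
  then have id: "is_ideal_in (Kx n m) P" by (simp add: is_prime_ideal_in_def)
  have ar: "autoreduced L" and LP: "set L \<subseteq> P" using cs unfolding char_set_def by blast+
  have gV: "vars g \<subseteq> VS n m r" using gR Kx_le_iff by blast
  have wR: "w \<in> RV L g" using top_props(1)[OF ne gV] w_def by simp
  have wg: "w \<in> vars g" using wR RV_sub by blast
  have wV: "w \<in> VS n m r" using wg gV by blast
  have wvalid: "valid_var n m w" using wV by (simp add: VS_def)
  have dpos: "deg_in w g > 0" using wg in_vars_deg_pos by blast
  have red: "redvar L g w" using wR by (simp add: RV_def)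
  have fprops: "nonconstant f \<and> f \<in> Kx n m \<and> f \<in> Kx_le n m r \<and> f \<in> P" if "f \<in> set L" for f
  proof -
    have "nonconstant f" using that ar unfolding autoreduced_def by blast
    moreover have "f \<in> Kx_le n m r" using that LR by blast
    moreover have "f \<in> P" using that LP by blast
    ultimately show ?thesis using Kx_le_Kx by blast
  qed
  let ?S = "prolong n m D r (set L)"
  let ?H = "H_of (set L)"
  consider (A) f where "f \<in> set L" "proper_deriv_of w (leader f)"
    | (B) f where "f \<in> set L" "w = leader f" "deg_in w f \<le> deg_in w g"
    using red unfolding redvar_def by blast
  then show ?thesis
  proof cases
    case A
    have fnc: "nonconstant f" "f \<in> Kx n m" and fR: "f \<in> Kx_le n m r" and fP: "f \<in> P"
      using fprops[OF A(1)] by blast+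
    define \<xi> where "\<xi> = map (\<lambda>i. snd w ! i - snd (leader f) ! i) [0..<m]"
    have dp: "length \<xi> = m \<and> linform n m (separant f) w (dpow D \<xi> f) \<and> var_less (leader f) w \<and>
         vars (dpow D \<xi> f) \<subseteq> {t. vle t w \<and> valid_var n m t}"
      unfolding \<xi>_def by (rule dpow_proper[OF fnc wvalid A(2)])
    let ?h = "dpow D \<xi> f"
    obtain T where T: "?h = separant f * Xp w 1 + T" "vars T \<subseteq> {t. var_less t w \<and> valid_var n m t}"
      using dp unfolding linform_def by blast
    have Sless: "var_less t w" if "t \<in> vars (separant f)" for t
    proof -
      have "t \<in> vars f" using that vars_separant by blast
      then have "vle t (leader f)" using leader_props(2)[OF fnc] by blast
      then show ?thesis using dp vle_vl_trans by blast
    qed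
    have wS: "w \<notin> vars (separant f)" using Sless vl_irrefl by blast
    have wT: "w \<notin> vars T" using T(2) vl_irrefl by blast
    have dT0: "degle w 0 T" using degle_0_iff[of w T] wT by blast
    then have dT: "degle w (1 - 1) T" by simp
    have above: "u \<notin> vars (separant f) \<and> u \<notin> vars T" if "var_less w u" for u
      using that Sless T(2) vl_asym by blast
    have hR: "?h \<in> Kx_le n m r"
    proof -
      have "vars ?h \<subseteq> VS n m r"
      proof
        fix t assume "t \<in> vars ?h"
        then have "vle t w" "valid_var n m t" using dp by blast+
        moreover have "sum_list (snd w) \<le> r" using wV by (simp add: VS_def)
        ultimately show "t \<in> VS n m r" using vle_sum[of t w] by (simp add: VS_def)
      qed
      then show ?thesis using Kx_le_iff by blast
    qed
    have hP: "?h \<in> P" using dpow_P[OF pd fP] dp by blast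
    have hS: "?h \<in> ?S" unfolding prolong_def using A(1) dp hR by blast
    obtain c' where c': "c' \<in> Kx_le n m r" "?H = separant f * c'" using H_factor(2)[OF A(1) LR] by blast
    show ?thesis unfolding w_def[symmetric]
      by (rule red_finish[OF id gR gP wV _ _ wS dT T(1) above separant_Kx_le[OF fR] hR hP hS c'])
         (use dpos in auto)
  next
    case B
    have fnc: "nonconstant f" "f \<in> Kx n m" and fR: "f \<in> Kx_le n m r" and fP: "f \<in> P"
      using fprops[OF B(1)] by blast+
    let ?e = "deg_in w f"
    have e1: "1 \<le> ?e" using deg_leader_pos[OF fnc] B(2) by simp
    have hdef: "f = initial f * Xp w ?e + lowpart w ?e f"
      unfolding initial_def B(2)[symmetric] by (rule lowpart_decomp)
    have wc: "w \<notin> vars (initial f)" using vars_initial B(2) by blast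
    have dh0: "degle w (?e - 1) (lowpart w ?e f)" by (rule degle_lowpart_self[OF degle_deg_in])
    have fle: "vle t w" if "t \<in> vars f" for t using leader_props(2)[OF fnc that] B(2) by simp
    have above: "u \<notin> vars (initial f) \<and> u \<notin> vars (lowpart w ?e f)" if "var_less w u" for u
    proof -
      have "u \<notin> vars f" using that fle vle_vl_trans vl_irrefl by blast
      then show ?thesis using vars_initial vars_lowpart by blast
    qed
    have hS: "f \<in> ?S"
    proof -
      have "f = dpow D (replicate m 0) f" by (simp add: dpow_zero)
      then show ?thesis unfolding prolong_def using B(1) fR by force
    qed
    obtain c' where c': "c' \<in> Kx_le n m r" "?H = initial f * c'" using H_factor(1)[OF B(1) LR] by blast
    show ?thesis unfolding w_def[symmetric]
      by (rule red_finish[OF id gR gP wV e1 B(3) wc dh0 hdef above initial_Kx_le[OF fR] fR fP hS c'])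
  qed
qed


lemma reduce_all:
  fixes L :: "'k::field_char_0 dpoly list"
  assumes pd: "prime_diff_ideal n m D P" and cs: "char_set L P" and LR: "set L \<subseteq> Kx_le n m r"
  shows "g \<in> Kx_le n m r \<and> g \<in> P \<longrightarrow>
    (\<exists>g' a l. g' \<in> Kx_le n m r \<and> g' \<in> P \<and> a \<in> Kx_le n m r \<and>
       H_of (set L) ^ l * g - a * g' \<in> gen_ideal (Kx_le n m r) (prolong n m D r (set L)) \<and>
       (\<forall>f\<in>set L. reduced_wrt g' f))"
proof -
  let ?R = "Kx_le n m r :: 'k dpoly set"
  let ?I = "gen_ideal (Kx_le n m r) (prolong n m D r (set L))"
  let ?H = "H_of (set L)"
  let ?rel = "inv_image (less_than <*lex*> less_than) (mu n m r L)"
  have wf: "wf ?rel" by (intro wf_inv_image wf_lex_prod wf_less_than)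
  have pr: "is_prime_ideal_in (Kx n m) P" using pd by (simp add: prime_diff_ideal_def)
  then have id: "is_ideal_in (Kx n m) P" by (simp add: is_prime_ideal_in_def)
  have ar: "autoreduced L" and LP: "set L \<subseteq> P" using cs unfolding char_set_def by blast+
  have LK: "\<forall>f\<in>set L. nonconstant f \<and> f \<in> Kx n m"
  proof
    fix f assume f: "f \<in> set L"
    have "nonconstant f" using f ar unfolding autoreduced_def by blast
    moreover have "f \<in> Kx n m" using f LR Kx_le_Kx by blast
    ultimately show "nonconstant f \<and> f \<in> Kx n m" by blast
  qed
  have HR: "?H \<in> ?R" by (rule H_Kx_le[OF LR])
  have closed: "\<And>a. a \<in> ?R \<Longrightarrow> c * a \<in> ?R" if "c \<in> ?R" for c
    using Kx_le_mult that by blast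
  show ?thesis
  proof (induction g rule: wf_induct[OF wf])
    case (1 g)
    show ?case
    proof
      assume g: "g \<in> ?R \<and> g \<in> P"
      then have gR: "g \<in> ?R" and gP: "g \<in> P" by blast+
      show "\<exists>g' a l. g' \<in> ?R \<and> g' \<in> P \<and> a \<in> ?R \<and> ?H ^ l * g - a * g' \<in> ?I \<and> (\<forall>f\<in>set L. reduced_wrt g' f)"
      proof (cases "RV L g = {}")
        case True
        have "?H ^ 0 * g - 1 * g \<in> ?I" using gi_zero by simp
        moreover have "\<forall>f\<in>set L. reduced_wrt g f" by (rule RV_empty_reduced[OF True LK])
        ultimately show ?thesis using gR gP Kx_le_one by blast
      next
        case False
        obtain g1 c' where s: "g1 \<in> ?R" "g1 \<in> P" "c' \<in> ?R" "?H * g - c' * g1 \<in> ?I"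
          "deg_in (topv n m r L g) g1 < deg_in (topv n m r L g) g"
          "\<forall>u. var_less (topv n m r L g) u \<longrightarrow> deg_in u g1 \<le> deg_in u g"
          using red_step[OF pd cs LR gR gP False] by blast
        have gv: "vars g \<subseteq> VS n m r" using gR Kx_le_iff by blast
        have g1v: "vars g1 \<subseteq> VS n m r" using s(1) Kx_le_iff by blast
        have "(mu n m r L g1, mu n m r L g) \<in> less_than <*lex*> less_than"
          by (rule mu_decrease[OF gv g1v False refl s(5)]) (use s(6) in blast)
        then have "(g1, g) \<in> ?rel" by simp
        then obtain g2 a l where IH: "g2 \<in> ?R" "g2 \<in> P" "a \<in> ?R" "?H ^ l * g1 - a * g2 \<in> ?I"
          "\<forall>f\<in>set L. reduced_wrt g2 f"
          using 1 s(1,2) by blast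
        have eq: "?H ^ Suc l * g - (c' * a) * g2 = ?H ^ l * (?H * g - c' * g1) + c' * (?H ^ l * g1 - a * g2)"
          by (simp add: algebra_simps)
        have "?H ^ l * (?H * g - c' * g1) \<in> ?I"
          by (rule gi_mult[OF closed[OF Kx_le_power[OF HR]] s(4)])
        moreover have "c' * (?H ^ l * g1 - a * g2) \<in> ?I"
          by (rule gi_mult[OF closed[OF s(3)] IH(4)])
        ultimately have "?H ^ Suc l * g - (c' * a) * g2 \<in> ?I" unfolding eq by (rule gi_add)
        moreover have "c' * a \<in> ?R" using Kx_le_mult s(3) IH(3) by blast
        ultimately show ?thesis using IH by blast
      qed
    qed
  qed
qed

lemma power_in_prime:
  assumes pr: "is_prime_ideal_in (Kx n m) P" and HK: "H \<in> Kx n m" and HP: "H \<notin> P"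
    and fK: "f \<in> Kx n m" and "H ^ l * f \<in> P"
  shows "f \<in> (P :: 'k::comm_ring_1 dpoly set)"
  using assms(5)
proof (induction l)
  case 0
  then show ?case by simp
next
  case (Suc l)
  have pK: "H ^ l * f \<in> Kx n m"
    using Kx_mult[OF _ fK] HK vars_power[of H l] unfolding Kx_iff by (meson order_trans)
  have "H * (H ^ l * f) \<in> P" using Suc.prems by (simp add: mult.assoc)
  then have "H \<in> P \<or> H ^ l * f \<in> P" using pr HK pK unfolding is_prime_ideal_in_def by blast
  then show ?case using HP Suc.IH by blast
qed

theorem lemma4p12:
  fixes n m r :: nat and D :: "nat \<Rightarrow> 'k::field_char_0 \<Rightarrow> 'k"
    and P :: "'k dpoly set" and L :: "'k dpoly list"
  assumes "diff_field m D"
    and "prime_diff_ideal n m D P"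
    and "char_set L P"
    and "set L \<subseteq> Kx_le n m r"
  shows "P \<inter> Kx_le n m r =
         saturation (Kx_le n m r) (gen_ideal (Kx_le n m r) (prolong n m D r (set L))) (H_of (set L))"
proof
  let ?R = "Kx_le n m r :: 'k dpoly set"
  let ?I = "gen_ideal (Kx_le n m r) (prolong n m D r (set L))"
  let ?H = "H_of (set L)"
  have pd: "prime_diff_ideal n m D P" by fact
  have cs: "char_set L P" by fact
  have LR: "set L \<subseteq> Kx_le n m r" by fact
  have pr: "is_prime_ideal_in (Kx n m) P" using pd by (simp add: prime_diff_ideal_def)
  then have id: "is_ideal_in (Kx n m) P" by (simp add: is_prime_ideal_in_def)
  show "P \<inter> ?R \<subseteq> saturation ?R ?I ?H"
  proof
    fix f assume f: "f \<in> P \<inter> ?R"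
    then obtain g' a l where r: "g' \<in> ?R" "g' \<in> P" "a \<in> ?R" "?H ^ l * f - a * g' \<in> ?I"
      "\<forall>f\<in>set L. reduced_wrt g' f"
      using reduce_all[OF pd cs LR, of f] by blast
    have "g' = 0"
    proof (rule ccontr)
      assume "g' \<noteq> 0"
      then show False using no_reduced_in_P[OF cs pr r(2) _ r(5)] by blast
    qed
    then have "?H ^ l * f \<in> ?I" using r(4) by simp
    then show "f \<in> saturation ?R ?I ?H" using f unfolding saturation_def by blast
  qed
  show "saturation ?R ?I ?H \<subseteq> P \<inter> ?R"
  proof
    fix f assume "f \<in> saturation ?R ?I ?H"
    then obtain l where fR: "f \<in> ?R" and fl: "?H ^ l * f \<in> ?I" unfolding saturation_def by blast
    have SP: "prolong n m D r (set L) \<subseteq> P"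
    proof
      fix h assume "h \<in> prolong n m D r (set L)"
      then obtain \<xi> g where "h = dpow D \<xi> g" "g \<in> set L" "length \<xi> = m"
        unfolding prolong_def by blast
      moreover have "g \<in> P" using cs \<open>g \<in> set L\<close> unfolding char_set_def by blast
      ultimately show "h \<in> P" using dpow_P[OF pd] by blast
    qed
    have "?I \<subseteq> P" by (rule gi_subset[OF id _ SP]) (use Kx_le_Kx in blast)
    then have "?H ^ l * f \<in> P" using fl by blast
    moreover have "?H \<in> Kx n m" using H_Kx_le[OF LR] Kx_le_Kx by blast
    moreover have "?H \<notin> P" by (rule H_notin[OF cs pr])
    ultimately have "f \<in> P" using power_in_prime[OF pr] fR Kx_le_Kx by blast
    then show "f \<in> P \<inter> ?R" using fR by blast
  qed
qed


end
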